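(* Let $S$ be a real skew-symmetric $d\times d$ matrix (not necessarily invertible), let $\mathcal H$ be a Hilbert space on which $\mathrm{CCR}(S)$ with canonical observables $X_1,\dots,X_d$ is represented, let $\psi\in\mathcal H$ be a cyclic unit vector for $\mathrm{CCR}(S)$, put $\psi(\xi):=e^{\sqrt{-1}\xi^iX_i}\psi$ for $\xi\in\mathbb R^d$, and for a bounded operator $A$ on $\mathcal H$ put $\varphi_A(\xi;\eta):=\langle\psi(\xi),A\psi(\eta)\rangle$. Let $D$ be a dense subset of $\mathbb R^d$ and let $\varphi:D\times D\to\mathbb C$ satisfy $0\prec\varphi\prec\varphi_I$ (with $\varphi_I$ restricted to $D\times D$). Then there exists a unique bounded operator $A$ on $\mathcal H$ with $0\le A\le I$ and $\varphi=\varphi_A$ on $D\times D$. Consequently, $\varphi$ extends continuously to $\mathbb R^d\times\mathbb R^d$.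
   Context: $\mathrm{CCR}(S)$ is the von Neumann algebra generated by unitaries $e^{\sqrt{-1}\xi^iX_i}$ satisfying $e^{\sqrt{-1}\xi^iX_i}e^{\sqrt{-1}\eta^jX_j}=e^{\sqrt{-1}\xi^\top S\eta}e^{\sqrt{-1}(\xi+\eta)^iX_i}$ (summation convention). A function $\varphi:D\times D\to\mathbb C$ is positive semidefinite, written $\varphi\succ0$, if for all $r\in\mathbb N$ and $\xi^{(1)},\dots,\xi^{(r)}\in D$ the matrix $[\varphi(\xi^{(i)};\xi^{(j)})]_{i,j}$ is positive semidefinite; $\varphi_1\succ\varphi_2$ means $\varphi_1-\varphi_2\succ0$, and $\varphi_1\prec\varphi_2$ means $\varphi_2\succ\varphi_1$. *)

theory Defs
  imports "HOL-Analysis.Analysis"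
begin

class complex_vector = real_vector +
  fixes scaleC :: "complex \<Rightarrow> 'a \<Rightarrow> 'a"
  assumes scaleC_add_right: "scaleC a (x + y) = scaleC a x + scaleC a y"
    and scaleC_add_left: "scaleC (a + b) x = scaleC a x + scaleC b x"
    and scaleC_scaleC: "scaleC a (scaleC b x) = scaleC (a * b) x"
    and scaleC_one: "scaleC 1 x = x"
    and scaleR_scaleC: "scaleR r x = scaleC (complex_of_real r) x"

text \<open>Inner product: conjugate-linear in the first, linear in the second argument.\<close>
class complex_inner = complex_vector + real_normed_vector +
  fixes cinner :: "'a \<Rightarrow> 'a \<Rightarrow> complex"
  assumes cinner_commute: "cinner x y = cnj (cinner y x)"
    and cinner_add_right: "cinner x (y + z) = cinner x y + cinner x z"
    and cinner_scaleC_right: "cinner x (scaleC c y) = c * cinner x y"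
    and cinner_ge_zero: "0 \<le> Re (cinner x x)"
    and cinner_eq_zero_iff: "cinner x x = 0 \<longleftrightarrow> x = 0"
    and norm_eq_sqrt_cinner: "norm x = sqrt (Re (cinner x x))"

class chilbert_space = complex_inner + complete_space

definition clinear :: "('a::complex_vector \<Rightarrow> 'b::complex_vector) \<Rightarrow> bool" where
  "clinear f \<longleftrightarrow> (\<forall>x y. f (x + y) = f x + f y) \<and> (\<forall>c x. f (scaleC c x) = scaleC c (f x))"

definition bounded_clinear :: "('a::{complex_vector,real_normed_vector} \<Rightarrow> 'b::{complex_vector,real_normed_vector}) \<Rightarrow> bool" where
  "bounded_clinear f \<longleftrightarrow> clinear f \<and> (\<exists>K. \<forall>x. norm (f x) \<le> norm x * K)"

definition unitary_op :: "('a::complex_inner \<Rightarrow> 'a) \<Rightarrow> bool" where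
  "unitary_op U \<longleftrightarrow> bounded_clinear U \<and> surj U \<and> (\<forall>x y. cinner (U x) (U y) = cinner x y)"

definition cnonneg :: "complex \<Rightarrow> bool" where
  "cnonneg z \<longleftrightarrow> Im z = 0 \<and> 0 \<le> Re z"

definition positive_op :: "('a::complex_inner \<Rightarrow> 'a) \<Rightarrow> bool" where
  "positive_op A \<longleftrightarrow> (\<forall>x. cnonneg (cinner x (A x)))"

definition commutant :: "('a::complex_inner \<Rightarrow> 'a) set \<Rightarrow> ('a \<Rightarrow> 'a) set" where
  "commutant T = {B. bounded_clinear B \<and> (\<forall>C\<in>T. B \<circ> C = C \<circ> B)}"

text \<open>A (regular) representation of CCR(S) on the Hilbert space:
  \<open>W \<xi>\<close> stands for \<open>e^{\<i>\<xi>^i X_i}\<close>.\<close>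
definition ccr_rep :: "real^'d^'d \<Rightarrow> (real^'d \<Rightarrow> 'h::chilbert_space \<Rightarrow> 'h) \<Rightarrow> bool" where
  "ccr_rep S W \<longleftrightarrow>
     (\<forall>\<xi>. unitary_op (W \<xi>)) \<and>
     (\<forall>\<xi> \<eta>. W \<xi> \<circ> W \<eta> = (\<lambda>x. scaleC (exp (\<i> * complex_of_real (\<xi> \<bullet> (S *v \<eta>)))) (W (\<xi> + \<eta>) x))) \<and>
     (\<forall>x. continuous_on UNIV (\<lambda>\<xi>. W \<xi> x))"

definition CCR_alg :: "(real^'d \<Rightarrow> 'h::chilbert_space \<Rightarrow> 'h) \<Rightarrow> ('h \<Rightarrow> 'h) set" where
  "CCR_alg W = commutant (commutant (range W))"

definition cyclic_vec :: "('h::chilbert_space \<Rightarrow> 'h) set \<Rightarrow> 'h \<Rightarrow> bool" where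
  "cyclic_vec M \<psi> \<longleftrightarrow> closure {B \<psi> | B. B \<in> M} = UNIV"

definition phi_op :: "(real^'d \<Rightarrow> 'h::chilbert_space \<Rightarrow> 'h) \<Rightarrow> 'h \<Rightarrow> ('h \<Rightarrow> 'h) \<Rightarrow> real^'d \<Rightarrow> real^'d \<Rightarrow> complex" where
  "phi_op W \<psi> A \<xi> \<eta> = cinner (W \<xi> \<psi>) (A (W \<eta> \<psi>))"

definition psd_on :: "'a set \<Rightarrow> ('a \<Rightarrow> 'a \<Rightarrow> complex) \<Rightarrow> bool" where
  "psd_on D \<phi> \<longleftrightarrow> (\<forall>(r::nat) (x::nat \<Rightarrow> 'a) (c::nat \<Rightarrow> complex). (\<forall>i<r. x i \<in> D) \<longrightarrow>
      cnonneg (\<Sum>i<r. \<Sum>j<r. cnj (c i) * \<phi> (x i) (x j) * c j))"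

end

theory Submission
  imports Defs
begin

lemma CS_aux:
  fixes qa qb :: real and b :: complex
  assumes H: "\<And>t. 0 \<le> qa + 2 * Re (t * b) + (cmod t)^2 * qb" and "0 \<le> qa" "0 \<le> qb"
  shows "(cmod b)^2 \<le> qa * qb"
proof (cases "qb = 0")
  case False
  then have qb: "qb > 0" using assms by auto
  have e1: "Re ((- cnj b / of_real qb) * b) = -((cmod b)^2 / qb)"
    using cmod_power2[of b] by (simp add: power2_eq_square)
  have e2: "(cmod (- cnj b / of_real qb))^2 = (cmod b)^2 / qb^2"
    using qb by (simp add: norm_divide power_divide)
  have "0 \<le> qa - 2 * (cmod b)^2 / qb + (cmod b)^2 / qb^2 * qb"
    using H[of "- cnj b / of_real qb", unfolded e1 e2] by simp
  also have "(cmod b)^2 / qb^2 * qb = (cmod b)^2 / qb" using qb by (simp add: power2_eq_square)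
  finally have "0 \<le> qa - (cmod b)^2 / qb" by simp
  then have "(cmod b)^2 / qb \<le> qa" by simp
  then show ?thesis using qb by (simp add: divide_le_eq mult.commute)
next
  case True
  show ?thesis
  proof (rule ccontr)
    assume "\<not> ?thesis"
    then have bp: "(cmod b)^2 > 0" using True by simp
    define s where "s = (qa + 1) / (2 * (cmod b)^2)"
    have e1: "Re ((- of_real s * cnj b) * b) = -(s * (cmod b)^2)"
      using cmod_power2[of b] by (simp add: power2_eq_square algebra_simps)
    have "0 \<le> qa - 2 * s * (cmod b)^2" using H[of "- of_real s * cnj b", unfolded e1] True by simp
    also have "2 * s * (cmod b)^2 = qa + 1" using bp by (simp add: s_def)
    finally show False by simp
  qed
qed

lemma scaleC_zero_right[simp]: "scaleC a 0 = 0"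
proof -
  have "scaleC a 0 + scaleC a 0 = scaleC a 0 + 0" by (simp add: scaleC_add_right[symmetric])
  then show ?thesis by (simp only: add_left_cancel)
qed
lemma scaleC_zero_left[simp]: "scaleC 0 x = 0"
proof -
  have "scaleC 0 x + scaleC 0 x = scaleC 0 x + 0" by (simp add: scaleC_add_left[symmetric])
  then show ?thesis by (simp only: add_left_cancel)
qed
lemma scaleC_minus_right: "scaleC a (- x) = - scaleC a x"
proof -
  have "scaleC a (- x) + scaleC a x = 0" by (simp add: scaleC_add_right[symmetric])
  then show ?thesis by (simp add: add_eq_0_iff2)
qed
lemma scaleC_diff_right: "scaleC a (x - y) = scaleC a x - scaleC a y"
  by (simp only: diff_conv_add_uminus scaleC_add_right scaleC_minus_right)
lemma scaleC_minus_left: "scaleC (- a) x = - scaleC a x"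
proof -
  have "scaleC (- a) x + scaleC a x = 0" by (simp add: scaleC_add_left[symmetric])
  then show ?thesis by (simp add: add_eq_0_iff2)
qed
lemma scaleC_diff_left: "scaleC (a - b) x = scaleC a x - scaleC b x"
  using scaleC_add_left[of a "-b" x] by (simp add: scaleC_minus_left)
lemma scaleC_sum_right: "scaleC a (sum f A) = (\<Sum>i\<in>A. scaleC a (f i))"
  by (induction A rule: infinite_finite_induct) (auto simp: scaleC_add_right)
lemma scaleC_sum_left: "scaleC (sum f A) x = (\<Sum>i\<in>A. scaleC (f i) x)"
  by (induction A rule: infinite_finite_induct) (auto simp: scaleC_add_left)

lemma cinner_add_left: "cinner (x + y) z = cinner x z + cinner y z"
proof -
  have "cinner (x + y) z = cnj (cinner z (x + y))" by (rule cinner_commute)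
  also have "\<dots> = cnj (cinner z x) + cnj (cinner z y)" by (simp add: cinner_add_right)
  finally show ?thesis by (simp add: cinner_commute[of x z] cinner_commute[of y z])
qed
lemma cinner_scaleC_left: "cinner (scaleC c x) y = cnj c * cinner x y"
proof -
  have "cinner (scaleC c x) y = cnj (cinner y (scaleC c x))" by (rule cinner_commute)
  also have "\<dots> = cnj c * cnj (cinner y x)" by (simp add: cinner_scaleC_right)
  finally show ?thesis by (simp add: cinner_commute[of x y])
qed
lemma cinner_zero_right[simp]: "cinner x 0 = 0"
proof -
  have "cinner x 0 + cinner x 0 = cinner x 0 + 0" by (simp add: cinner_add_right[symmetric])
  then show ?thesis by simp
qed
lemma cinner_zero_left[simp]: "cinner 0 x = 0"
proof -
  have "cinner 0 x + cinner 0 x = cinner 0 x + 0" by (simp add: cinner_add_left[symmetric])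
  then show ?thesis by simp
qed
lemma cinner_minus_right: "cinner x (- y) = - cinner x y"
proof -
  have "cinner x y + cinner x (- y) = 0" by (simp add: cinner_add_right[symmetric])
  from minus_unique[OF this] show ?thesis by (rule sym)
qed
lemma cinner_minus_left: "cinner (- x) y = - cinner x y"
proof -
  have "cinner x y + cinner (- x) y = 0" by (simp add: cinner_add_left[symmetric])
  from minus_unique[OF this] show ?thesis by (rule sym)
qed
lemma cinner_diff_right: "cinner x (y - z) = cinner x y - cinner x z"
  using cinner_add_right[of x y "-z"] by (simp add: cinner_minus_right)
lemma cinner_diff_left: "cinner (x - y) z = cinner x z - cinner y z"
  using cinner_add_left[of x "-y" z] by (simp add: cinner_minus_left)
lemma cinner_sum_right: "cinner x (sum f A) = (\<Sum>i\<in>A. cinner x (f i))"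
  by (induction A rule: infinite_finite_induct) (auto simp: cinner_add_right)
lemma cinner_sum_left: "cinner (sum f A) x = (\<Sum>i\<in>A. cinner (f i) x)"
  by (induction A rule: infinite_finite_induct) (auto simp: cinner_add_left)
lemma cinner_self_Im: "Im (cinner x x) = 0"
proof -
  have "Im (cinner x x) = Im (cnj (cinner x x))" using cinner_commute[of x x] by simp
  then show ?thesis by simp
qed
lemma cinner_self: "cinner x x = complex_of_real ((norm x)^2)"
proof -
  have "(norm x)^2 = Re (cinner x x)" using norm_eq_sqrt_cinner[of x] cinner_ge_zero[of x] by simp
  then show ?thesis using cinner_self_Im[of x] by (simp add: complex_eq_iff)
qed
lemma norm_sq_Re: "(norm x)^2 = Re (cinner x x)"
  using cinner_self[of x] by simp

lemma expand_sq: "(norm (x + scaleC t y))^2 = (norm x)^2 + 2 * Re (t * cinner x y) + (cmod t)^2 * (norm y)^2"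
proof -
  have "cinner (x + scaleC t y) (x + scaleC t y) = cinner x x + t * cinner x y + cnj t * cinner y x + (cnj t * t) * cinner y y"
    by (simp add: cinner_add_left cinner_add_right cinner_scaleC_left cinner_scaleC_right algebra_simps)
  also have "cnj t * cinner y x = cnj (t * cinner x y)" by (simp add: cinner_commute[of y x])
  also have "cnj t * t = of_real ((cmod t)^2)" by (metis complex_norm_square mult.commute of_real_power)
  finally have "Re (cinner (x + scaleC t y) (x + scaleC t y)) = Re (cinner x x) + 2 * Re (t * cinner x y) + (cmod t)^2 * Re (cinner y y)"
    by simp
  then show ?thesis by (simp add: norm_sq_Re)
qed

lemma cinner_CS: "cmod (cinner x y) \<le> norm x * norm y"
proof -
  have "(cmod (cinner x y))^2 \<le> (norm x)^2 * (norm y)^2"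
  proof (rule CS_aux)
    show "0 \<le> (norm x)^2 + 2 * Re (t * cinner x y) + (cmod t)^2 * (norm y)^2" for t
      using expand_sq[of x t y] by (metis zero_le_power2)
  qed auto
  then have "(cmod (cinner x y))^2 \<le> (norm x * norm y)^2" by (simp add: power_mult_distrib)
  then show ?thesis by (rule power2_le_imp_le) simp
qed

lemma norm_scaleC: fixes x :: "'a::complex_inner" shows "norm (scaleC c x) = cmod c * norm x"
proof -
  have "cinner (scaleC c x) (scaleC c x) = (cnj c * c) * cinner x x"
    by (simp add: cinner_scaleC_left cinner_scaleC_right)
  also have "cnj c * c = of_real ((cmod c)^2)" by (metis complex_norm_square mult.commute of_real_power)
  finally have "complex_of_real ((norm (scaleC c x))^2) = complex_of_real ((cmod c)^2 * (norm x)^2)"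
    by (simp only: cinner_self of_real_mult)
  then have "(norm (scaleC c x))^2 = (cmod c * norm x)^2" by (simp only: of_real_eq_iff power_mult_distrib)
  then show ?thesis by (simp add: power2_eq_iff_nonneg)
qed

lemma bounded_bilinear_cinner: "bounded_bilinear (cinner :: 'a::complex_inner \<Rightarrow> 'a \<Rightarrow> complex)"
proof
  show "cinner (a + a') b = cinner a b + cinner a' b" for a a' b by (rule cinner_add_left)
  show "cinner a (b + b') = cinner a b + cinner a b'" for a b b' by (rule cinner_add_right)
  show "cinner (scaleR r a) b = scaleR r (cinner a b)" for r a b
    by (simp add: scaleR_scaleC cinner_scaleC_left scaleR_conv_of_real)
  show "cinner a (scaleR r b) = scaleR r (cinner a b)" for r a b
    by (simp add: scaleR_scaleC cinner_scaleC_right scaleR_conv_of_real)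
  show "\<exists>K. \<forall>a b. norm (cinner a b) \<le> norm a * norm b * K"
    by (rule exI[of _ 1]) (simp add: cinner_CS)
qed

lemma pythag: "cinner x y = 0 \<Longrightarrow> (norm (x + y))^2 = (norm x)^2 + (norm y)^2"
  using expand_sq[of x 1 y] by (simp add: scaleC_one)

lemma parallelogram: fixes x y :: "'a::complex_inner" shows "(norm (x + y))^2 + (norm (x - y))^2 = 2 * (norm x)^2 + 2 * (norm y)^2"
proof -
  have e: "(norm (x - y))^2 = (norm x)^2 - 2 * Re (cinner x y) + (norm y)^2"
    using expand_sq[of x "-1" y] by (simp add: scaleC_minus_left scaleC_one)
  show ?thesis using expand_sq[of x 1 y] e by (simp add: scaleC_one)
qed

lemma cinner_eq_zero_all: "(\<And>y. cinner y x = 0) \<Longrightarrow> x = 0"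
  using cinner_eq_zero_iff by blast

definition csubspace :: "'a::complex_vector set \<Rightarrow> bool" where
  "csubspace M \<longleftrightarrow> 0 \<in> M \<and> (\<forall>x\<in>M. \<forall>y\<in>M. x + y \<in> M) \<and> (\<forall>c. \<forall>x\<in>M. scaleC c x \<in> M)"

lemma csubspace_diff: "csubspace M \<Longrightarrow> x \<in> M \<Longrightarrow> y \<in> M \<Longrightarrow> x - y \<in> M"
proof -
  assume a: "csubspace M" "x \<in> M" "y \<in> M"
  then have "scaleC (-1) y \<in> M" unfolding csubspace_def by blast
  then have "x + scaleC (-1) y \<in> M" using a unfolding csubspace_def by blast
  then show ?thesis by (simp add: scaleC_minus_left scaleC_one)
qed

lemma projection_exists:
  fixes x :: "'a::chilbert_space"
  assumes sub: "csubspace M" and cl: "closed M"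
  shows "\<exists>m\<in>M. \<forall>y\<in>M. cinner (x - m) y = 0"
proof -
  have M0: "0 \<in> M" and Madd: "\<And>a b. a \<in> M \<Longrightarrow> b \<in> M \<Longrightarrow> a + b \<in> M"
    and Msc: "\<And>c a. a \<in> M \<Longrightarrow> scaleC c a \<in> M" using sub unfolding csubspace_def by auto
  define d where "d = Inf ((\<lambda>m. norm (x - m)) ` M)"
  have bdd: "bdd_below ((\<lambda>m. norm (x - m)) ` M)" by (rule bdd_belowI[of _ 0]) auto
  have dle: "d \<le> norm (x - m)" if "m \<in> M" for m
    unfolding d_def using bdd that by (auto intro: cInf_lower)
  have d0: "0 \<le> d" unfolding d_def using M0 by (intro cInf_greatest) auto
  have "\<exists>m\<in>M. norm (x - m) < d + inverse (real (Suc n))" for n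
  proof -
    have "Inf ((\<lambda>m. norm (x - m)) ` M) < d + inverse (real (Suc n))" unfolding d_def[symmetric] by simp
    from cInf_lessD[OF _ this] M0 show ?thesis by auto
  qed
  then obtain m where mM: "\<And>n. m n \<in> M" and mlt: "\<And>n. norm (x - m n) < d + inverse (real (Suc n))"
    by metis
  define e where "e n = inverse (real (Suc n))" for n
  have e0: "0 < e n" "e n \<le> 1" for n unfolding e_def by (auto simp: field_simps)
  have key: "(norm (m p - m q))^2 \<le> 4 * (d + 1) * (e p + e q)" for p q
  proof -
    define a where "a = x - m p"
    define b where "b = x - m q"
    define mid where "mid = scaleC (of_real (1/2)) (m p + m q)"
    have midM: "mid \<in> M" unfolding mid_def using mM Madd Msc by auto
    have "a + b = scaleR 2 (x - mid)"
      unfolding a_def b_def mid_def scaleR_scaleC[symmetric] by (simp add: algebra_simps scaleR_2)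
    then have "norm (a + b) = 2 * norm (x - mid)" by simp
    then have ab: "4 * d^2 \<le> (norm (a + b))^2"
      using dle[OF midM] d0 by (simp add: power_mult_distrib power_mono)
    have "a - b = m q - m p" unfolding a_def b_def by simp
    then have nab: "(norm (a - b))^2 = (norm (m p - m q))^2" by (simp add: norm_minus_commute)
    have pa: "norm a \<le> d + e p" using mlt[of p] unfolding a_def e_def by simp
    have pb: "norm b \<le> d + e q" using mlt[of q] unfolding b_def e_def by simp
    have "(norm a)^2 \<le> (d + e p)^2" using pa by (simp add: power_mono)
    moreover have "(norm b)^2 \<le> (d + e q)^2" using pb by (simp add: power_mono)
    moreover have "(e p)^2 \<le> e p" "(e q)^2 \<le> e q" using e0[of p] e0[of q]
      by (simp_all add: power2_eq_square mult_le_cancel_left1 mult_left_le)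
    ultimately have "(norm (m p - m q))^2 \<le> 2 * (d + e p)^2 + 2 * (d + e q)^2 - 4 * d^2"
      using parallelogram[of a b] ab nab by linarith
    also have "\<dots> = 4 * d * (e p + e q) + 2 * (e p)^2 + 2 * (e q)^2"
      by (simp add: power2_eq_square algebra_simps)
    also have "\<dots> \<le> 4 * (d + 1) * (e p + e q)"
      using \<open>(e p)^2 \<le> e p\<close> \<open>(e q)^2 \<le> e q\<close> e0[of p] e0[of q] d0 by (simp add: algebra_simps)
    finally show ?thesis .
  qed
  have "Cauchy m"
  proof (rule metric_CauchyI)
    fix eps :: real assume eps: "0 < eps"
    obtain N :: nat where N: "8 * (d + 1) / eps^2 < real N" using reals_Archimedean2 by blast
    show "\<exists>M. \<forall>p\<ge>M. \<forall>q\<ge>M. dist (m p) (m q) < eps"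
    proof (intro exI allI impI)
      fix p q assume p: "N \<le> p" and q: "N \<le> q"
      have ep: "e p \<le> 1 / (real N + 1)" "e q \<le> 1 / (real N + 1)"
        using p q unfolding e_def by (auto simp: field_simps)
      have "(dist (m p) (m q))^2 \<le> 4 * (d + 1) * (e p + e q)" using key by (simp add: dist_norm)
      also have "\<dots> \<le> 4 * (d + 1) * (2 / (real N + 1))"
        using ep d0 by (intro mult_left_mono) auto
      also have "\<dots> < eps^2"
      proof -
        have "8 * (d + 1) < eps^2 * real N" using N eps by (simp add: field_simps)
        also have "\<dots> \<le> eps^2 * (real N + 1)" using eps by simp
        finally show ?thesis by (simp add: field_simps)
      qed
      finally show "dist (m p) (m q) < eps" using eps by (smt (verit) power_mono zero_le_dist)
    qed
  qed
  then obtain m0 where lim: "m \<longlonglongrightarrow> m0" using Cauchy_convergent convergent_def by blast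
  have m0M: "m0 \<in> M" using cl mM lim closed_sequentially by blast
  have "(\<lambda>n. norm (x - m n)) \<longlonglongrightarrow> norm (x - m0)" by (intro tendsto_intros lim)
  moreover have "(\<lambda>n. d + inverse (real (Suc n))) \<longlonglongrightarrow> d + 0"
    by (intro tendsto_intros LIMSEQ_inverse_real_of_nat)
  ultimately have "norm (x - m0) \<le> d + 0"
    by (rule LIMSEQ_le) (use mlt less_imp_le in blast)
  then have best: "norm (x - m0) \<le> norm (x - y)" if "y \<in> M" for y using dle[OF that] by simp
  have orth: "cinner (x - m0) y = 0" if yM: "y \<in> M" for y
  proof -
    have "(cmod (cinner (x - m0) y))^2 \<le> 0 * (norm y)^2"
    proof (rule CS_aux)
      fix t
      have "m0 - scaleC t y \<in> M" using m0M yM Msc sub csubspace_diff by blast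
      then have "norm (x - m0) \<le> norm (x - (m0 - scaleC t y))" by (rule best)
      also have "x - (m0 - scaleC t y) = (x - m0) + scaleC t y" by simp
      finally have "(norm (x - m0))^2 \<le> (norm ((x - m0) + scaleC t y))^2" by (simp add: power_mono)
      then show "0 \<le> 0 + 2 * Re (t * cinner (x - m0) y) + (cmod t)\<^sup>2 * (norm y)^2"
        unfolding expand_sq by simp
    qed auto
    then show ?thesis by simp
  qed
  show ?thesis using m0M orth by blast
qed

lemma projection_unique:
  fixes x :: "'a::complex_inner"
  assumes sub: "csubspace M" and "m \<in> M" "m' \<in> M"
    and "\<forall>y\<in>M. cinner (x - m) y = 0" "\<forall>y\<in>M. cinner (x - m') y = 0"
  shows "m = m'"
proof -
  have d: "m' - m \<in> M" using assms csubspace_diff by blast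
  have "cinner ((x - m) - (x - m')) (m' - m) = 0"
    using assms d by (simp add: cinner_diff_left)
  then have "cinner (m' - m) (m' - m) = 0" by (simp add: algebra_simps)
  then have "m' - m = 0" using cinner_eq_zero_iff by blast
  then show ?thesis by simp
qed

lemma riesz:
  fixes g :: "'a::chilbert_space \<Rightarrow> complex"
  assumes add: "\<And>x y. g (x + y) = g x + g y" and sc: "\<And>c x. g (scaleC c x) = cnj c * g x"
    and cont: "continuous_on UNIV g"
  shows "\<exists>z. \<forall>v. g v = cinner v z"
proof (cases "\<forall>v. g v = 0")
  case True
  then show ?thesis by (intro exI[of _ 0]) simp
next
  case False
  then obtain x0 where gx0: "g x0 \<noteq> 0" by blast
  have g0: "g 0 = 0" using add[of 0 0] by simp
  have gdiff: "g (a - b) = g a - g b" for a b using add[of "a - b" b] by simp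
  define N where "N = {x. g x = 0}"
  have subN: "csubspace N" unfolding N_def csubspace_def using g0 add sc by auto
  have clN: "closed N" unfolding N_def by (rule closed_Collect_eq[OF cont]) simp
  obtain m where mN: "m \<in> N" and orth: "\<forall>y\<in>N. cinner (x0 - m) y = 0"
    using projection_exists[OF subN clN, of x0] by blast
  define u where "u = x0 - m"
  have gu: "g u = g x0" using mN unfolding u_def N_def by (simp add: gdiff)
  have u0: "u \<noteq> 0" using gu gx0 g0 by auto
  have nu: "norm u \<noteq> 0" using u0 by simp
  define z where "z = scaleC (g u / of_real ((norm u)^2)) u"
  have "g v = cinner v z" for v
  proof -
    define c where "c = cnj (g v / g u)"
    define w where "w = v - scaleC c u"
    have "g w = 0" unfolding w_def c_def using gu gx0 by (simp add: gdiff sc)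
    then have "cinner u w = 0" using orth unfolding N_def u_def by auto
    then have "cinner w u = 0" using cinner_commute[of w u] by simp
    then have "cinner v u = cnj c * cinner u u" unfolding w_def by (simp add: cinner_diff_left cinner_scaleC_left)
    then have "cinner v u = (g v / g u) * of_real ((norm u)^2)" unfolding c_def by (simp add: cinner_self)
    then show ?thesis unfolding z_def using gu gx0 nu by (simp add: cinner_scaleC_right field_simps)
  qed
  then show ?thesis by blast
qed

lemma dense_closed:
  assumes "closure V = UNIV" "closed S" "V \<subseteq> S" shows "x \<in> S"
  using closure_minimal[OF assms(3,2)] assms(1) by auto

lemma dense_eq:
  fixes f g :: "'a::topological_space \<Rightarrow> 'b::t2_space"
  assumes "closure V = UNIV" "continuous_on UNIV f" "continuous_on UNIV g" "\<And>x. x \<in> V \<Longrightarrow> f x = g x"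
  shows "f x = g x"
proof -
  have "x \<in> {x. f x = g x}"
    by (rule dense_closed[OF assms(1)]) (use assms in \<open>auto intro: closed_Collect_eq\<close>)
  then show ?thesis by simp
qed

lemma dense_eq2:
  fixes f g :: "'a::topological_space \<Rightarrow> 'a \<Rightarrow> 'b::t2_space"
  assumes "closure V = UNIV" "continuous_on UNIV (\<lambda>p. f (fst p) (snd p))"
    "continuous_on UNIV (\<lambda>p. g (fst p) (snd p))" "\<And>x y. x \<in> V \<Longrightarrow> y \<in> V \<Longrightarrow> f x y = g x y"
  shows "f x y = g x y"
proof -
  have c: "closure (V \<times> V) = UNIV" using assms(1) by (simp add: closure_Times)
  have "(\<lambda>p. f (fst p) (snd p)) (x, y) = (\<lambda>p. g (fst p) (snd p)) (x, y)"
    by (rule dense_eq[OF c assms(2,3)]) (use assms(4) in auto)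
  then show ?thesis by simp
qed

lemma ext_lip:
  fixes f :: "'a::real_normed_vector \<Rightarrow> 'b::{real_normed_vector,complete_space}"
  assumes dense: "closure V = UNIV" and lip: "\<And>x y. x \<in> V \<Longrightarrow> y \<in> V \<Longrightarrow> norm (f x - f y) \<le> C * norm (x - y)"
  shows "\<exists>g. continuous_on UNIV g \<and> (\<forall>x\<in>V. g x = f x)"
proof -
  have "uniformly_continuous_on V f"
    unfolding uniformly_continuous_on_def
  proof (intro allI impI)
    fix e :: real assume e: "0 < e"
    show "\<exists>d>0. \<forall>x\<in>V. \<forall>x'\<in>V. dist x' x < d \<longrightarrow> dist (f x') (f x) < e"
    proof (intro exI[of _ "e / (\<bar>C\<bar> + 1)"] conjI ballI impI)
      show "0 < e / (\<bar>C\<bar> + 1)" using e by simp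
      fix x x' assume xV: "x \<in> V" and x'V: "x' \<in> V" and dd: "dist x' x < e / (\<bar>C\<bar> + 1)"
      have "dist (f x') (f x) \<le> C * dist x' x" using lip[OF x'V xV] by (simp add: dist_norm)
      also have "\<dots> \<le> (\<bar>C\<bar> + 1) * dist x' x" by (intro mult_right_mono) auto
      also have "\<dots> < (\<bar>C\<bar> + 1) * (e / (\<bar>C\<bar> + 1))"
        using dd by (intro mult_strict_left_mono) auto
      also have "\<dots> = e" by simp
      finally show "dist (f x') (f x) < e" .
    qed
  qed
  then obtain g where g1: "uniformly_continuous_on (closure V) g" and g2: "\<And>x. x \<in> V \<Longrightarrow> f x = g x"
    using uniformly_continuous_on_extension_on_closure by metis
  have "continuous_on UNIV g" using uniformly_continuous_imp_continuous[OF g1] dense by simp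
  then show ?thesis using g2 by auto
qed

lemma clinear_zero: "clinear f \<Longrightarrow> f 0 = 0"
proof -
  assume "clinear f"
  then have "f (0 + 0) = f 0 + f 0" unfolding clinear_def by blast
  then show ?thesis by simp
qed

lemma clinear_add: "clinear f \<Longrightarrow> f (x + y) = f x + f y"
  unfolding clinear_def by blast

lemma clinear_scaleC: "clinear f \<Longrightarrow> f (scaleC c x) = scaleC c (f x)"
  unfolding clinear_def by blast

lemma clinear_sum: "clinear f \<Longrightarrow> f (sum g A) = (\<Sum>i\<in>A. f (g i))"
  by (induction A rule: infinite_finite_induct) (auto simp: clinear_zero clinear_add)

lemma clinear_diff: "clinear f \<Longrightarrow> f (x - y) = f x - f y"
  using clinear_add[of f "x - y" y] by simp

lemma bounded_clinear_bounded_linear: "bounded_clinear f \<Longrightarrow> bounded_linear f"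
proof -
  assume a: "bounded_clinear f"
  then obtain K where K: "\<And>x. norm (f x) \<le> norm x * K" unfolding bounded_clinear_def by blast
  show ?thesis
  proof (rule bounded_linear_intro[of _ K])
    show "f (x + y) = f x + f y" for x y using a unfolding bounded_clinear_def clinear_def by blast
    show "f (scaleR r x) = scaleR r (f x)" for r x using a unfolding bounded_clinear_def clinear_def scaleR_scaleC by blast
  qed (rule K)
qed

lemma bounded_clinear_cont: "bounded_clinear f \<Longrightarrow> continuous_on S f"
  using bounded_clinear_bounded_linear linear_continuous_on by blast

lemma closed_cnonneg:
  fixes h :: "'a::topological_space \<Rightarrow> complex"
  assumes "continuous_on UNIV h" shows "closed {x. cnonneg (h x)}"
proof -
  have cRe: "continuous_on UNIV (\<lambda>x. Re (h x))" by (rule bounded_linear.continuous_on[OF bounded_linear_Re assms])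
  have cIm: "continuous_on UNIV (\<lambda>x. Im (h x))" by (rule bounded_linear.continuous_on[OF bounded_linear_Im assms])
  have "{x. cnonneg (h x)} = {x. Im (h x) = 0} \<inter> {x. 0 \<le> Re (h x)}" unfolding cnonneg_def by auto
  moreover have "closed {x. Im (h x) = 0}" by (rule closed_Collect_eq[OF cIm]) simp
  moreover have "closed {x. 0 \<le> Re (h x)}" by (rule closed_Collect_le[OF _ cRe]) simp
  ultimately show ?thesis by auto
qed

lemma csubspace_sum: "csubspace M \<Longrightarrow> (\<And>i. i \<in> A \<Longrightarrow> g i \<in> M) \<Longrightarrow> sum g A \<in> M"
  by (induction A rule: infinite_finite_induct) (auto simp: csubspace_def)

lemma continuous_cinner:
  fixes f g :: "'b::topological_space \<Rightarrow> 'a::complex_inner"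
  shows "continuous_on S f \<Longrightarrow> continuous_on S g \<Longrightarrow> continuous_on S (\<lambda>x. cinner (f x) (g x))"
  by (rule bounded_bilinear.continuous_on[OF bounded_bilinear_cinner])

lemma continuous_scaleC:
  fixes f :: "'b::topological_space \<Rightarrow> 'a::complex_inner"
  shows "continuous_on S f \<Longrightarrow> continuous_on S (\<lambda>x. scaleC c (f x))"
proof -
  have "bounded_linear (scaleC c :: 'a \<Rightarrow> 'a)"
    by (rule bounded_linear_intro[of _ "cmod c"])
      (auto simp: scaleC_add_right scaleR_scaleC scaleC_scaleC mult.commute norm_scaleC)
  then show "continuous_on S f \<Longrightarrow> continuous_on S (\<lambda>x. scaleC c (f x))"
    by (rule bounded_linear.continuous_on)
qed

lemma closure_csubspace:
  fixes V :: "'a::complex_inner set"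
  assumes "csubspace V" shows "csubspace (closure V)"
proof -
  have add: "x + y \<in> closure V" if "x \<in> closure V" "y \<in> closure V" for x y
  proof -
    have c: "continuous_on (closure (V \<times> V)) (\<lambda>p. fst p + snd p)"
      by (intro continuous_on_add continuous_on_fst continuous_on_snd continuous_on_id)
    have "(\<lambda>p. fst p + snd p) ` (V \<times> V) \<subseteq> V"
      using assms unfolding csubspace_def by auto
    then have s: "(\<lambda>p. fst p + snd p) ` (V \<times> V) \<subseteq> closure V" using closure_subset by (rule order_trans)
    have "(\<lambda>p. fst p + snd p) ` closure (V \<times> V) \<subseteq> closure V"
      by (rule image_closure_subset[OF c closed_closure s])
    then show ?thesis using that by (auto simp: closure_Times image_subset_iff)
  qed
  have sc: "scaleC c x \<in> closure V" if "x \<in> closure V" for c x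
  proof -
    have c: "continuous_on (closure V) (\<lambda>x. scaleC c x)"
      by (intro continuous_scaleC continuous_on_id)
    have "(\<lambda>x. scaleC c x) ` V \<subseteq> V"
      using assms unfolding csubspace_def by auto
    then have s: "(\<lambda>x. scaleC c x) ` V \<subseteq> closure V" using closure_subset by (rule order_trans)
    have "(\<lambda>x. scaleC c x) ` closure V \<subseteq> closure V"
      by (rule image_closure_subset[OF c closed_closure s])
    then show ?thesis using that by auto
  qed
  have "0 \<in> closure V" using assms closure_subset unfolding csubspace_def by blast
  then show ?thesis using add sc unfolding csubspace_def by blast
qed

definition fsupp :: "('a \<Rightarrow> complex) \<Rightarrow> 'a set" where
  "fsupp a = {x. a x \<noteq> 0}"

definition fin :: "'a set \<Rightarrow> ('a \<Rightarrow> complex) \<Rightarrow> bool" where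
  "fin D a \<longleftrightarrow> finite (fsupp a) \<and> fsupp a \<subseteq> D"

definition cvec :: "('a \<Rightarrow> 'h \<Rightarrow> 'h) \<Rightarrow> 'h \<Rightarrow> ('a \<Rightarrow> complex) \<Rightarrow> 'h::complex_vector" where
  "cvec W \<psi> a = (\<Sum>x\<in>fsupp a. scaleC (a x) (W x \<psi>))"

definition formF :: "'a set \<Rightarrow> ('a \<Rightarrow> 'a \<Rightarrow> complex) \<Rightarrow> ('a \<Rightarrow> complex) \<Rightarrow> ('a \<Rightarrow> complex) \<Rightarrow> complex" where
  "formF F \<phi> a b = (\<Sum>x\<in>F. \<Sum>y\<in>F. cnj (a x) * \<phi> x y * b y)"

definition form :: "('a \<Rightarrow> 'a \<Rightarrow> complex) \<Rightarrow> ('a \<Rightarrow> complex) \<Rightarrow> ('a \<Rightarrow> complex) \<Rightarrow> complex" where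
  "form \<phi> a b = (\<Sum>x\<in>fsupp a. \<Sum>y\<in>fsupp b. cnj (a x) * \<phi> x y * b y)"

lemma fsupp_add: "fsupp (\<lambda>x. a x + b x) \<subseteq> fsupp a \<union> fsupp b"
  unfolding fsupp_def by auto

lemma fsupp_scale: "fsupp (\<lambda>x. c * a x) \<subseteq> fsupp a"
  unfolding fsupp_def by auto

lemma fin_add: "fin D a \<Longrightarrow> fin D b \<Longrightarrow> fin D (\<lambda>x. a x + b x)"
  unfolding fin_def using fsupp_add[of a b] by (meson finite_Un finite_subset le_sup_iff order_trans)

lemma fin_scale: "fin D a \<Longrightarrow> fin D (\<lambda>x. c * a x)"
  unfolding fin_def using fsupp_scale[of c a] by (meson finite_subset order_trans)

lemma cvec_on:
  assumes "finite F" "fsupp a \<subseteq> F"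
  shows "cvec W \<psi> a = (\<Sum>x\<in>F. scaleC (a x) (W x \<psi>))"
  unfolding cvec_def
  by (rule sum.mono_neutral_left[OF assms(1,2)]) (auto simp: fsupp_def)

lemma form_on:
  assumes "finite F" "fsupp a \<subseteq> F" "fsupp b \<subseteq> F"
  shows "form \<phi> a b = formF F \<phi> a b"
proof -
  have fa: "finite (fsupp a)" "finite (fsupp b)" using assms finite_subset by auto
  have inner: "(\<Sum>y\<in>fsupp b. cnj (a x) * \<phi> x y * b y) = (\<Sum>y\<in>F. cnj (a x) * \<phi> x y * b y)" for x
    by (rule sum.mono_neutral_left[OF assms(1,3)]) (auto simp: fsupp_def)
  have "form \<phi> a b = (\<Sum>x\<in>fsupp a. \<Sum>y\<in>F. cnj (a x) * \<phi> x y * b y)"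
    unfolding form_def inner ..
  also have "\<dots> = (\<Sum>x\<in>F. \<Sum>y\<in>F. cnj (a x) * \<phi> x y * b y)"
    by (rule sum.mono_neutral_left[OF assms(1,2)]) (auto simp: fsupp_def)
  finally show ?thesis unfolding formF_def .
qed

lemma formF_add_left: "formF F \<phi> (\<lambda>x. a x + a' x) b = formF F \<phi> a b + formF F \<phi> a' b"
  unfolding formF_def by (simp add: distrib_left distrib_right sum.distrib)

lemma formF_add_right: "formF F \<phi> a (\<lambda>x. b x + b' x) = formF F \<phi> a b + formF F \<phi> a b'"
  unfolding formF_def by (simp add: distrib_left distrib_right sum.distrib)

lemma formF_scale_left: "formF F \<phi> (\<lambda>x. c * a x) b = cnj c * formF F \<phi> a b"
  unfolding formF_def by (simp add: sum_distrib_left mult.assoc)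

lemma formF_scale_right: "formF F \<phi> a (\<lambda>x. c * b x) = c * formF F \<phi> a b"
  unfolding formF_def by (simp add: sum_distrib_left mult.assoc mult.left_commute)

lemma cvec_add:
  assumes "fin D a" "fin D b"
  shows "cvec W \<psi> (\<lambda>x. a x + b x) = cvec W \<psi> a + cvec W \<psi> b"
proof -
  define F where "F = fsupp a \<union> fsupp b"
  have F: "finite F" using assms unfolding fin_def F_def by auto
  have sa: "fsupp a \<subseteq> F" and sb: "fsupp b \<subseteq> F" unfolding F_def by auto
  have sab: "fsupp (\<lambda>x. a x + b x) \<subseteq> F" using fsupp_add[of a b] unfolding F_def .
  have "cvec W \<psi> (\<lambda>x. a x + b x) = (\<Sum>x\<in>F. scaleC (a x + b x) (W x \<psi>))"
    by (rule cvec_on[OF F sab])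
  also have "\<dots> = (\<Sum>x\<in>F. scaleC (a x) (W x \<psi>)) + (\<Sum>x\<in>F. scaleC (b x) (W x \<psi>))"
    by (simp add: scaleC_add_left sum.distrib)
  also have "\<dots> = cvec W \<psi> a + cvec W \<psi> b"
    by (simp only: cvec_on[OF F sa, symmetric] cvec_on[OF F sb, symmetric])
  finally show ?thesis .
qed

lemma cvec_scale:
  assumes "fin D a"
  shows "cvec W \<psi> (\<lambda>x. c * a x) = scaleC c (cvec W \<psi> a)"
proof -
  have F: "finite (fsupp a)" using assms unfolding fin_def by auto
  have "cvec W \<psi> (\<lambda>x. c * a x) = (\<Sum>x\<in>fsupp a. scaleC (c * a x) (W x \<psi>))"
    by (rule cvec_on[OF F fsupp_scale])
  also have "\<dots> = scaleC c (cvec W \<psi> a)"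
    unfolding cvec_def by (simp add: scaleC_sum_right scaleC_scaleC)
  finally show ?thesis .
qed

lemma cvec_diff:
  assumes "fin D a" "fin D b"
  shows "cvec W \<psi> (\<lambda>x. a x - b x) = cvec W \<psi> a - cvec W \<psi> b"
proof -
  have "cvec W \<psi> (\<lambda>x. a x + (-1) * b x) = cvec W \<psi> a + cvec W \<psi> (\<lambda>x. (-1) * b x)"
    by (rule cvec_add[OF assms(1) fin_scale[OF assms(2)]])
  also have "cvec W \<psi> (\<lambda>x. (-1) * b x) = - cvec W \<psi> b"
    using cvec_scale[OF assms(2), of W \<psi> "-1"] by (simp add: scaleC_minus_left scaleC_one)
  finally show ?thesis by simp
qed

lemma form_add_left:
  assumes "fin D a" "fin D a'" "fin D b"
  shows "form \<phi> (\<lambda>x. a x + a' x) b = form \<phi> a b + form \<phi> a' b"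
proof -
  define F where "F = fsupp a \<union> fsupp a' \<union> fsupp b"
  have F: "finite F" using assms unfolding fin_def F_def by auto
  have s: "fsupp a \<subseteq> F" "fsupp a' \<subseteq> F" "fsupp b \<subseteq> F" "fsupp (\<lambda>x. a x + a' x) \<subseteq> F"
    using fsupp_add[of a a'] unfolding F_def by auto
  show ?thesis using s by (simp add: form_on[OF F] formF_add_left)
qed

lemma form_add_right:
  assumes "fin D a" "fin D b" "fin D b'"
  shows "form \<phi> a (\<lambda>x. b x + b' x) = form \<phi> a b + form \<phi> a b'"
proof -
  define F where "F = fsupp a \<union> fsupp b \<union> fsupp b'"
  have F: "finite F" using assms unfolding fin_def F_def by auto
  have s: "fsupp a \<subseteq> F" "fsupp b \<subseteq> F" "fsupp b' \<subseteq> F" "fsupp (\<lambda>x. b x + b' x) \<subseteq> F"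
    using fsupp_add[of b b'] unfolding F_def by auto
  show ?thesis using s by (simp add: form_on[OF F] formF_add_right)
qed

lemma form_scale_left:
  assumes "fin D a" "fin D b"
  shows "form \<phi> (\<lambda>x. c * a x) b = cnj c * form \<phi> a b"
proof -
  define F where "F = fsupp a \<union> fsupp b"
  have F: "finite F" using assms unfolding fin_def F_def by auto
  have s: "fsupp a \<subseteq> F" "fsupp b \<subseteq> F" "fsupp (\<lambda>x. c * a x) \<subseteq> F"
    using fsupp_scale[of c a] unfolding F_def by auto
  show ?thesis using s by (simp add: form_on[OF F] formF_scale_left)
qed

lemma form_scale_right:
  assumes "fin D a" "fin D b"
  shows "form \<phi> a (\<lambda>x. c * b x) = c * form \<phi> a b"
proof -
  define F where "F = fsupp a \<union> fsupp b"
  have F: "finite F" using assms unfolding fin_def F_def by auto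
  have s: "fsupp a \<subseteq> F" "fsupp b \<subseteq> F" "fsupp (\<lambda>x. c * b x) \<subseteq> F"
    using fsupp_scale[of c b] unfolding F_def by auto
  show ?thesis using s by (simp add: form_on[OF F] formF_scale_right)
qed

lemma form_diff_left:
  assumes "fin D a" "fin D a'" "fin D b"
  shows "form \<phi> (\<lambda>x. a x - a' x) b = form \<phi> a b - form \<phi> a' b"
proof -
  have "form \<phi> (\<lambda>x. a x + (-1) * a' x) b = form \<phi> a b + form \<phi> (\<lambda>x. (-1) * a' x) b"
    by (rule form_add_left[OF assms(1) fin_scale[OF assms(2)] assms(3)])
  also have "form \<phi> (\<lambda>x. (-1) * a' x) b = - form \<phi> a' b"
    using form_scale_left[OF assms(2,3), of \<phi> "-1"] by simp
  finally show ?thesis by simp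
qed

lemma form_diff_right:
  assumes "fin D a" "fin D b" "fin D b'"
  shows "form \<phi> a (\<lambda>x. b x - b' x) = form \<phi> a b - form \<phi> a b'"
proof -
  have "form \<phi> a (\<lambda>x. b x + (-1) * b' x) = form \<phi> a b + form \<phi> a (\<lambda>x. (-1) * b' x)"
    by (rule form_add_right[OF assms(1,2) fin_scale[OF assms(3)]])
  also have "form \<phi> a (\<lambda>x. (-1) * b' x) = - form \<phi> a b'"
    using form_scale_right[OF assms(1,3), of \<phi> "-1"] by simp
  finally show ?thesis by simp
qed

lemma form_diff_kernel:
  "form (\<lambda>x y. \<phi>1 x y - \<phi>2 x y) a b = form \<phi>1 a b - form \<phi>2 a b"
  unfolding form_def by (simp add: algebra_simps sum_subtractf)

lemma cinner_vec:
  fixes W :: "real^'d \<Rightarrow> 'h::chilbert_space \<Rightarrow> 'h"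
  assumes T: "clinear T"
  shows "cinner (cvec W \<psi> a) (T (cvec W \<psi> b)) = form (phi_op W \<psi> T) a b"
proof -
  have "cinner (cvec W \<psi> a) (T (cvec W \<psi> b))
      = (\<Sum>y\<in>fsupp b. b y * (\<Sum>x\<in>fsupp a. cnj (a x) * cinner (W x \<psi>) (T (W y \<psi>))))"
    unfolding cvec_def
    by (simp only: clinear_sum[OF T] clinear_scaleC[OF T] cinner_sum_left cinner_sum_right
      cinner_scaleC_left cinner_scaleC_right)
  also have "\<dots> = (\<Sum>y\<in>fsupp b. \<Sum>x\<in>fsupp a. b y * (cnj (a x) * cinner (W x \<psi>) (T (W y \<psi>))))"
    by (simp only: sum_distrib_left)
  also have "\<dots> = (\<Sum>x\<in>fsupp a. \<Sum>y\<in>fsupp b. b y * (cnj (a x) * cinner (W x \<psi>) (T (W y \<psi>))))"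
    by (rule sum.swap)
  also have "\<dots> = form (phi_op W \<psi> T) a b"
    unfolding form_def phi_op_def by (simp only: mult.commute mult.left_commute mult.assoc)
  finally show ?thesis .
qed

lemma clinear_id: "clinear id"
  unfolding clinear_def by simp

lemma psd_form:
  assumes psd: "psd_on D \<phi>" and a: "fin D a"
  shows "cnonneg (form \<phi> a a)"
proof -
  define F where "F = fsupp a"
  have F: "finite F" "F \<subseteq> D" using a unfolding fin_def F_def by auto
  obtain h where h: "bij_betw h {0..<card F} F" using ex_bij_betw_nat_finite[OF F(1)] by blast
  have hD: "\<forall>i<card F. h i \<in> D" using h F(2) unfolding bij_betw_def by auto
  have c: "cnonneg (\<Sum>i<card F. \<Sum>j<card F. cnj (a (h i)) * \<phi> (h i) (h j) * a (h j))"
    using psd_on_def[THEN iffD1, OF psd, rule_format, of "card F" h "\<lambda>i. a (h i)"] hD by simp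
  have inner: "(\<Sum>j<card F. cnj (a (h i)) * \<phi> (h i) (h j) * a (h j)) = (\<Sum>y\<in>F. cnj (a (h i)) * \<phi> (h i) y * a y)" for i
    unfolding lessThan_atLeast0 by (rule sum.reindex_bij_betw[OF h])
  have "(\<Sum>i<card F. \<Sum>j<card F. cnj (a (h i)) * \<phi> (h i) (h j) * a (h j))
      = (\<Sum>i<card F. \<Sum>y\<in>F. cnj (a (h i)) * \<phi> (h i) y * a y)" unfolding inner ..
  also have "\<dots> = (\<Sum>x\<in>F. \<Sum>y\<in>F. cnj (a x) * \<phi> x y * a y)"
    unfolding lessThan_atLeast0 by (rule sum.reindex_bij_betw[OF h])
  also have "\<dots> = form \<phi> a a" unfolding form_def F_def ..
  finally show ?thesis using c by simp
qed

lemma form_herm: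
  assumes psd: "psd_on D \<phi>" and a: "fin D a" and b: "fin D b"
  shows "form \<phi> b a = cnj (form \<phi> a b)"
proof -
  have ab: "fin D (\<lambda>x. a x + b x)" by (rule fin_add[OF a b])
  have ib: "fin D (\<lambda>x. \<i> * b x)" by (rule fin_scale[OF b])
  have aib: "fin D (\<lambda>x. a x + \<i> * b x)" by (rule fin_add[OF a ib])
  have e1: "form \<phi> (\<lambda>x. a x + b x) (\<lambda>x. a x + b x) = form \<phi> a a + form \<phi> a b + form \<phi> b a + form \<phi> b b"
    by (simp add: form_add_left[OF a b ab] form_add_right[OF a a b] form_add_right[OF b a b])
  have e2: "form \<phi> (\<lambda>x. a x + \<i> * b x) (\<lambda>x. a x + \<i> * b x) = form \<phi> a a + \<i> * form \<phi> a b - \<i> * form \<phi> b a + form \<phi> b b"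
    by (simp add: form_add_left[OF a ib aib] form_add_right[OF a a ib] form_add_right[OF ib a ib]
        form_scale_left[OF b a] form_scale_left[OF b ib] form_scale_right[OF b b] form_scale_right[OF a b])
  have i1: "Im (form \<phi> (\<lambda>x. a x + b x) (\<lambda>x. a x + b x)) = 0" using psd_form[OF psd ab] unfolding cnonneg_def by simp
  have i2: "Im (form \<phi> (\<lambda>x. a x + \<i> * b x) (\<lambda>x. a x + \<i> * b x)) = 0" using psd_form[OF psd aib] unfolding cnonneg_def by simp
  have i3: "Im (form \<phi> a a) = 0" "Im (form \<phi> b b) = 0" using psd_form[OF psd a] psd_form[OF psd b] unfolding cnonneg_def by simp_all
  have "Im (form \<phi> b a) = - Im (form \<phi> a b)" using i1 i3 unfolding e1 by simp
  moreover have "Re (form \<phi> b a) = Re (form \<phi> a b)" using i2 i3 unfolding e2 by simp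
  ultimately show ?thesis by (simp add: complex_eq_iff)
qed

lemma form_CS:
  assumes psd: "psd_on D \<phi>" and a: "fin D a" and b: "fin D b"
  shows "(cmod (form \<phi> a b))^2 \<le> Re (form \<phi> a a) * Re (form \<phi> b b)"
proof (rule CS_aux)
  fix t
  have tb: "fin D (\<lambda>x. t * b x)" by (rule fin_scale[OF b])
  have atb: "fin D (\<lambda>x. a x + t * b x)" by (rule fin_add[OF a tb])
  have e: "form \<phi> (\<lambda>x. a x + t * b x) (\<lambda>x. a x + t * b x)
      = form \<phi> a a + t * form \<phi> a b + cnj t * cnj (form \<phi> a b) + (cnj t * t) * form \<phi> b b"
    by (simp add: form_add_left[OF a tb atb] form_add_right[OF a a tb] form_add_right[OF tb a tb]
        form_scale_left[OF b a] form_scale_left[OF b tb] form_scale_right[OF b b] form_scale_right[OF a b]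
        form_herm[OF psd a b] mult.assoc)
  have "cnj t * t = of_real ((cmod t)^2)" by (metis complex_norm_square mult.commute of_real_power)
  then have "Re (form \<phi> (\<lambda>x. a x + t * b x) (\<lambda>x. a x + t * b x))
      = Re (form \<phi> a a) + 2 * Re (t * form \<phi> a b) + (cmod t)^2 * Re (form \<phi> b b)"
    unfolding e by simp
  moreover have "0 \<le> Re (form \<phi> (\<lambda>x. a x + t * b x) (\<lambda>x. a x + t * b x))"
    using psd_form[OF psd atb] unfolding cnonneg_def by simp
  ultimately show "0 \<le> Re (form \<phi> a a) + 2 * Re (t * form \<phi> a b) + (cmod t)^2 * Re (form \<phi> b b)" by simp
next
  show "0 \<le> Re (form \<phi> a a)" "0 \<le> Re (form \<phi> b b)"
    using psd_form[OF psd a] psd_form[OF psd b] unfolding cnonneg_def by simp_all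
qed

definition Vset :: "('a \<Rightarrow> 'h \<Rightarrow> 'h) \<Rightarrow> 'h \<Rightarrow> 'a set \<Rightarrow> 'h::complex_vector set" where
  "Vset W \<psi> D = {cvec W \<psi> a | a. fin D a}"

lemma fin_diff: "fin D a \<Longrightarrow> fin D b \<Longrightarrow> fin D (\<lambda>x. a x - b x)"
proof -
  assume a: "fin D a" and b: "fin D b"
  have "fsupp (\<lambda>x. a x - b x) \<subseteq> fsupp a \<union> fsupp b" unfolding fsupp_def by auto
  then show ?thesis using a b unfolding fin_def by (meson finite_Un finite_subset le_sup_iff order_trans)
qed

lemma fin_zero: "fin D (\<lambda>x. 0)" and cvec_zero: "cvec W \<psi> (\<lambda>x. 0) = 0"
  unfolding fin_def fsupp_def cvec_def by auto

lemma Vset_csubspace: "csubspace (Vset W \<psi> D)"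
  unfolding csubspace_def Vset_def
proof (intro conjI ballI allI)
  show "0 \<in> {cvec W \<psi> a |a. fin D a}" using fin_zero[of D] cvec_zero[of W \<psi>] by force
  fix x y assume "x \<in> {cvec W \<psi> a |a. fin D a}" "y \<in> {cvec W \<psi> a |a. fin D a}"
  then obtain a b where a: "fin D a" and b: "fin D b" and e: "x = cvec W \<psi> a" "y = cvec W \<psi> b" by blast
  have "x + y = cvec W \<psi> (\<lambda>z. a z + b z)" using cvec_add[OF a b, of W \<psi>] e by simp
  then show "x + y \<in> {cvec W \<psi> a |a. fin D a}" using fin_add[OF a b] by blast
next
  fix c x assume "x \<in> {cvec W \<psi> a |a. fin D a}"
  then obtain a where a: "fin D a" and e: "x = cvec W \<psi> a" by blast
  have "scaleC c x = cvec W \<psi> (\<lambda>z. c * a z)" using cvec_scale[OF a, of W \<psi> c] e by simp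
  then show "scaleC c x \<in> {cvec W \<psi> a |a. fin D a}" using fin_scale[OF a] by blast
qed

definition delta :: "'a \<Rightarrow> 'a \<Rightarrow> complex" where
  "delta x = (\<lambda>y. if y = x then 1 else 0)"

lemma fsupp_delta: "fsupp (delta x) = {x}"
  unfolding fsupp_def delta_def by auto

lemma fin_delta: "x \<in> D \<Longrightarrow> fin D (delta x)"
  unfolding fin_def fsupp_delta by auto

lemma cvec_delta: "cvec W \<psi> (delta x) = W x \<psi>"
  unfolding cvec_def fsupp_delta by (simp add: delta_def scaleC_one)

lemma form_delta: "form \<phi> (delta x) (delta y) = \<phi> x y"
  unfolding form_def fsupp_delta by (simp add: delta_def)

lemma W_in_Vset: "x \<in> D \<Longrightarrow> W x \<psi> \<in> Vset W \<psi> D"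
  unfolding Vset_def using fin_delta[of x D] cvec_delta[of W \<psi> x] by force

lemma form_cong:
  assumes "\<And>x y. x \<in> fsupp a \<Longrightarrow> y \<in> fsupp b \<Longrightarrow> \<phi>1 x y = \<phi>2 x y"
  shows "form \<phi>1 a b = form \<phi>2 a b"
  unfolding form_def using assms by (intro sum.cong refl) auto

lemma fin_fsupp_D: "fin D a \<Longrightarrow> x \<in> fsupp a \<Longrightarrow> x \<in> D"
  unfolding fin_def by auto

definition rep :: "('a \<Rightarrow> 'h \<Rightarrow> 'h) \<Rightarrow> 'h \<Rightarrow> 'a set \<Rightarrow> 'h::complex_vector \<Rightarrow> ('a \<Rightarrow> complex)" where
  "rep W \<psi> D v = (SOME a. fin D a \<and> cvec W \<psi> a = v)"

lemma rep:
  assumes "v \<in> Vset W \<psi> D" shows "fin D (rep W \<psi> D v) \<and> cvec W \<psi> (rep W \<psi> D v) = v"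
proof -
  have "\<exists>a. fin D a \<and> cvec W \<psi> a = v" using assms unfolding Vset_def by blast
  then show ?thesis unfolding rep_def by (rule someI_ex)
qed

definition Bv :: "(real^'d \<Rightarrow> 'h::complex_vector \<Rightarrow> 'h) \<Rightarrow> 'h \<Rightarrow> (real^'d) set \<Rightarrow> (real^'d \<Rightarrow> real^'d \<Rightarrow> complex) \<Rightarrow> 'h \<Rightarrow> 'h \<Rightarrow> complex" where
  "Bv W \<psi> D \<phi> v w = form \<phi> (rep W \<psi> D v) (rep W \<psi> D w)"

context
  fixes W :: "real^'d \<Rightarrow> 'h::chilbert_space \<Rightarrow> 'h" and \<psi> :: 'h and D :: "(real^'d) set"
    and \<phi> :: "real^'d \<Rightarrow> real^'d \<Rightarrow> complex"
  assumes psd1: "psd_on D \<phi>" and psd2: "psd_on D (\<lambda>\<xi> \<eta>. phi_op W \<psi> id \<xi> \<eta> - \<phi> \<xi> \<eta>)"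
begin

lemma qle:
  assumes a: "fin D a"
  shows "Re (form \<phi> a a) \<le> (norm (cvec W \<psi> a))^2"
proof -
  have "cnonneg (form (\<lambda>\<xi> \<eta>. phi_op W \<psi> id \<xi> \<eta> - \<phi> \<xi> \<eta>) a a)" by (rule psd_form[OF psd2 a])
  then have "cnonneg (form (phi_op W \<psi> id) a a - form \<phi> a a)" by (simp only: form_diff_kernel)
  moreover have "form (phi_op W \<psi> id) a a = cinner (cvec W \<psi> a) (cvec W \<psi> a)"
    using cinner_vec[OF clinear_id, of W \<psi> a a] by simp
  ultimately show ?thesis unfolding cnonneg_def by (simp add: norm_sq_Re)
qed

lemma fbound:
  assumes a: "fin D a" and b: "fin D b"
  shows "cmod (form \<phi> a b) \<le> norm (cvec W \<psi> a) * norm (cvec W \<psi> b)"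
proof -
  have "(cmod (form \<phi> a b))^2 \<le> Re (form \<phi> a a) * Re (form \<phi> b b)" by (rule form_CS[OF psd1 a b])
  also have "\<dots> \<le> (norm (cvec W \<psi> a))^2 * (norm (cvec W \<psi> b))^2"
    using qle[OF a] qle[OF b] psd_form[OF psd1 a] psd_form[OF psd1 b] unfolding cnonneg_def
    by (intro mult_mono) auto
  also have "\<dots> = (norm (cvec W \<psi> a) * norm (cvec W \<psi> b))^2" by (simp add: power_mult_distrib)
  finally show ?thesis by (rule power2_le_imp_le) simp
qed

lemma fwelldef:
  assumes a: "fin D a" and a': "fin D a'" and b: "fin D b" and b': "fin D b'"
    and va: "cvec W \<psi> a = cvec W \<psi> a'" and vb: "cvec W \<psi> b = cvec W \<psi> b'"
  shows "form \<phi> a b = form \<phi> a' b'"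
proof -
  have "cmod (form \<phi> (\<lambda>x. a x - a' x) b) \<le> norm (cvec W \<psi> (\<lambda>x. a x - a' x)) * norm (cvec W \<psi> b)"
    by (rule fbound[OF fin_diff[OF a a'] b])
  also have "cvec W \<psi> (\<lambda>x. a x - a' x) = 0" using cvec_diff[OF a a', of W \<psi>] va by simp
  finally have 1: "form \<phi> a b = form \<phi> a' b" using form_diff_left[OF a a' b] by simp
  have "cmod (form \<phi> a' (\<lambda>x. b x - b' x)) \<le> norm (cvec W \<psi> a') * norm (cvec W \<psi> (\<lambda>x. b x - b' x))"
    by (rule fbound[OF a' fin_diff[OF b b']])
  also have "cvec W \<psi> (\<lambda>x. b x - b' x) = 0" using cvec_diff[OF b b', of W \<psi>] vb by simp
  finally have 2: "form \<phi> a' b = form \<phi> a' b'" using form_diff_right[OF a' b b'] by simp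
  show ?thesis using 1 2 by simp
qed

lemma Bv_cvec:
  assumes a: "fin D a" and b: "fin D b"
  shows "Bv W \<psi> D \<phi> (cvec W \<psi> a) (cvec W \<psi> b) = form \<phi> a b"
proof -
  have va: "cvec W \<psi> a \<in> Vset W \<psi> D" and vb: "cvec W \<psi> b \<in> Vset W \<psi> D" using a b unfolding Vset_def by auto
  show ?thesis unfolding Bv_def using rep[OF va] rep[OF vb] a b by (intro fwelldef) auto
qed

lemma VsetE:
  assumes "v \<in> Vset W \<psi> D" obtains a where "fin D a" "v = cvec W \<psi> a"
  using assms unfolding Vset_def by blast

lemma Bv_add_left:
  assumes "v \<in> Vset W \<psi> D" "v' \<in> Vset W \<psi> D" "w \<in> Vset W \<psi> D"
  shows "Bv W \<psi> D \<phi> (v + v') w = Bv W \<psi> D \<phi> v w + Bv W \<psi> D \<phi> v' w"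
proof -
  obtain a a' b where a: "fin D a" and a': "fin D a'" and b: "fin D b"
    and e: "v = cvec W \<psi> a" "v' = cvec W \<psi> a'" "w = cvec W \<psi> b"
    using assms VsetE by metis
  have "v + v' = cvec W \<psi> (\<lambda>x. a x + a' x)" using cvec_add[OF a a', of W \<psi>] e by simp
  then show ?thesis using e Bv_cvec[OF fin_add[OF a a'] b] Bv_cvec[OF a b] Bv_cvec[OF a' b]
      form_add_left[OF a a' b] by simp
qed

lemma Bv_add_right:
  assumes "v \<in> Vset W \<psi> D" "w \<in> Vset W \<psi> D" "w' \<in> Vset W \<psi> D"
  shows "Bv W \<psi> D \<phi> v (w + w') = Bv W \<psi> D \<phi> v w + Bv W \<psi> D \<phi> v w'"
proof -
  obtain a b b' where a: "fin D a" and b: "fin D b" and b': "fin D b'"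
    and e: "v = cvec W \<psi> a" "w = cvec W \<psi> b" "w' = cvec W \<psi> b'"
    using assms VsetE by metis
  have "w + w' = cvec W \<psi> (\<lambda>x. b x + b' x)" using cvec_add[OF b b', of W \<psi>] e by simp
  then show ?thesis using e Bv_cvec[OF a fin_add[OF b b']] Bv_cvec[OF a b] Bv_cvec[OF a b']
      form_add_right[OF a b b'] by simp
qed

lemma Bv_scale_left:
  assumes "v \<in> Vset W \<psi> D" "w \<in> Vset W \<psi> D"
  shows "Bv W \<psi> D \<phi> (scaleC c v) w = cnj c * Bv W \<psi> D \<phi> v w"
proof -
  obtain a b where a: "fin D a" and b: "fin D b" and e: "v = cvec W \<psi> a" "w = cvec W \<psi> b"
    using assms VsetE by metis
  have "scaleC c v = cvec W \<psi> (\<lambda>x. c * a x)" using cvec_scale[OF a, of W \<psi> c] e by simp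
  then show ?thesis using e Bv_cvec[OF fin_scale[OF a] b] Bv_cvec[OF a b] form_scale_left[OF a b] by simp
qed

lemma Bv_scale_right:
  assumes "v \<in> Vset W \<psi> D" "w \<in> Vset W \<psi> D"
  shows "Bv W \<psi> D \<phi> v (scaleC c w) = c * Bv W \<psi> D \<phi> v w"
proof -
  obtain a b where a: "fin D a" and b: "fin D b" and e: "v = cvec W \<psi> a" "w = cvec W \<psi> b"
    using assms VsetE by metis
  have "scaleC c w = cvec W \<psi> (\<lambda>x. c * b x)" using cvec_scale[OF b, of W \<psi> c] e by simp
  then show ?thesis using e Bv_cvec[OF a fin_scale[OF b]] Bv_cvec[OF a b] form_scale_right[OF a b] by simp
qed

lemma Bv_bound:
  assumes "v \<in> Vset W \<psi> D" "w \<in> Vset W \<psi> D"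
  shows "cmod (Bv W \<psi> D \<phi> v w) \<le> norm v * norm w"
proof -
  obtain a b where a: "fin D a" and b: "fin D b" and e: "v = cvec W \<psi> a" "w = cvec W \<psi> b"
    using assms VsetE by metis
  show ?thesis using e Bv_cvec[OF a b] fbound[OF a b] by simp
qed

lemma Bv_pos:
  assumes "v \<in> Vset W \<psi> D"
  shows "cnonneg (Bv W \<psi> D \<phi> v v)" "cnonneg (cinner v v - Bv W \<psi> D \<phi> v v)"
proof -
  obtain a where a: "fin D a" and e: "v = cvec W \<psi> a" using assms VsetE by metis
  show "cnonneg (Bv W \<psi> D \<phi> v v)" using e Bv_cvec[OF a a] psd_form[OF psd1 a] by simp
  have "cnonneg (form (\<lambda>\<xi> \<eta>. phi_op W \<psi> id \<xi> \<eta> - \<phi> \<xi> \<eta>) a a)" by (rule psd_form[OF psd2 a])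
  then have "cnonneg (form (phi_op W \<psi> id) a a - form \<phi> a a)" by (simp only: form_diff_kernel)
  moreover have "form (phi_op W \<psi> id) a a = cinner (cvec W \<psi> a) (cvec W \<psi> a)"
    using cinner_vec[OF clinear_id, of W \<psi> a a] by simp
  ultimately show "cnonneg (cinner v v - Bv W \<psi> D \<phi> v v)" using e Bv_cvec[OF a a] by simp
qed

lemma Bv_delta:
  assumes "x \<in> D" "y \<in> D"
  shows "Bv W \<psi> D \<phi> (W x \<psi>) (W y \<psi>) = \<phi> x y"
  using Bv_cvec[OF fin_delta[OF assms(1)] fin_delta[OF assms(2)]] by (simp add: cvec_delta form_delta)

end

definition A0 :: "(real^'d \<Rightarrow> 'h::complex_inner \<Rightarrow> 'h) \<Rightarrow> 'h \<Rightarrow> (real^'d) set \<Rightarrow> (real^'d \<Rightarrow> real^'d \<Rightarrow> complex) \<Rightarrow> 'h \<Rightarrow> 'h" where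
  "A0 W \<psi> D \<phi> w = (SOME z. \<forall>v\<in>Vset W \<psi> D. Bv W \<psi> D \<phi> v w = cinner v z)"

lemma rep_unique:
  fixes z z' :: "'h::complex_inner"
  assumes dense: "closure V = UNIV" and h: "\<And>v. v \<in> V \<Longrightarrow> cinner v z = cinner v z'"
  shows "z = z'"
proof -
  have "cinner v z = cinner v z'" for v
    by (rule dense_eq[OF dense]) (auto intro!: continuous_cinner continuous_on_id continuous_on_const h)
  then have "cinner v (z - z') = 0" for v by (simp add: cinner_diff_right)
  then have "z - z' = 0" by (rule cinner_eq_zero_all)
  then show ?thesis by simp
qed

lemma cont_compose_add:
  fixes g :: "'a::real_normed_vector \<Rightarrow> 'b::topological_space"
  assumes "continuous_on UNIV g"
  shows "continuous_on UNIV (\<lambda>p::'a \<times> 'a. g (fst p + snd p))"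
  by (rule continuous_on_compose2[OF assms]) (auto intro!: continuous_intros)

lemma cont_add_fst_snd:
  fixes g :: "'a::topological_space \<Rightarrow> 'b::real_normed_vector"
  assumes "continuous_on UNIV g"
  shows "continuous_on UNIV (\<lambda>p::'a \<times> 'a. g (fst p) + g (snd p))"
proof -
  have 1: "continuous_on UNIV (\<lambda>p::'a \<times> 'a. g (fst p))"
    by (rule continuous_on_compose2[OF assms]) (auto intro!: continuous_intros)
  have 2: "continuous_on UNIV (\<lambda>p::'a \<times> 'a. g (snd p))"
    by (rule continuous_on_compose2[OF assms]) (auto intro!: continuous_intros)
  show ?thesis by (rule continuous_on_add[OF 1 2])
qed

context
  fixes W :: "real^'d \<Rightarrow> 'h::chilbert_space \<Rightarrow> 'h" and \<psi> :: 'h and D :: "(real^'d) set"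
    and \<phi> :: "real^'d \<Rightarrow> real^'d \<Rightarrow> complex"
  assumes psd1: "psd_on D \<phi>" and psd2: "psd_on D (\<lambda>\<xi> \<eta>. phi_op W \<psi> id \<xi> \<eta> - \<phi> \<xi> \<eta>)"
    and dense: "closure (Vset W \<psi> D) = UNIV"
begin

lemma Bv_diff_left:
  assumes x: "x \<in> Vset W \<psi> D" and y: "y \<in> Vset W \<psi> D" and w: "w \<in> Vset W \<psi> D"
  shows "Bv W \<psi> D \<phi> (x - y) w = Bv W \<psi> D \<phi> x w - Bv W \<psi> D \<phi> y w"
proof -
  have xy: "x - y \<in> Vset W \<psi> D" by (rule csubspace_diff[OF Vset_csubspace x y])
  have "Bv W \<psi> D \<phi> ((x - y) + y) w = Bv W \<psi> D \<phi> (x - y) w + Bv W \<psi> D \<phi> y w"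
    by (rule Bv_add_left[OF psd1 psd2 xy y w])
  then show ?thesis by simp
qed

lemma riesz_V:
  assumes w: "w \<in> Vset W \<psi> D"
  shows "\<exists>z. \<forall>v\<in>Vset W \<psi> D. Bv W \<psi> D \<phi> v w = cinner v z"
proof -
  have lip: "norm (Bv W \<psi> D \<phi> x w - Bv W \<psi> D \<phi> y w) \<le> norm w * norm (x - y)"
    if x: "x \<in> Vset W \<psi> D" and y: "y \<in> Vset W \<psi> D" for x y
  proof -
    have xy: "x - y \<in> Vset W \<psi> D" by (rule csubspace_diff[OF Vset_csubspace x y])
    have "Bv W \<psi> D \<phi> x w - Bv W \<psi> D \<phi> y w = Bv W \<psi> D \<phi> (x - y) w"
      using Bv_diff_left[OF x y w] by simp
    then show ?thesis using Bv_bound[OF psd1 psd2 xy w] by (simp add: mult.commute)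
  qed
  obtain g where gc: "continuous_on UNIV g" and gV: "\<forall>x\<in>Vset W \<psi> D. g x = Bv W \<psi> D \<phi> x w"
    using ext_lip[OF dense lip] by blast
  have gadd: "g (x + y) = g x + g y" for x y
  proof (rule dense_eq2[OF dense, where f = "\<lambda>x y. g (x + y)" and g = "\<lambda>x y. g x + g y"])
    show "continuous_on UNIV (\<lambda>p. g (fst p + snd p))" by (rule cont_compose_add[OF gc])
    show "continuous_on UNIV (\<lambda>p. g (fst p) + g (snd p))" by (rule cont_add_fst_snd[OF gc])
    fix x y assume x: "x \<in> Vset W \<psi> D" and y: "y \<in> Vset W \<psi> D"
    have xy: "x + y \<in> Vset W \<psi> D" using Vset_csubspace x y unfolding csubspace_def by blast
    show "g (x + y) = g x + g y" using gV x y xy Bv_add_left[OF psd1 psd2 x y w] by simp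
  qed
  have gsc: "g (scaleC c x) = cnj c * g x" for c x
  proof (rule dense_eq[OF dense, where f = "\<lambda>x. g (scaleC c x)" and g = "\<lambda>x. cnj c * g x"])
    show "continuous_on UNIV (\<lambda>x. g (scaleC c x))"
      by (rule continuous_on_compose2[OF gc]) (auto intro!: continuous_scaleC continuous_on_id)
    show "continuous_on UNIV (\<lambda>x. cnj c * g x)" by (intro continuous_on_mult_left gc)
    fix x assume x: "x \<in> Vset W \<psi> D"
    have cx: "scaleC c x \<in> Vset W \<psi> D" using Vset_csubspace x unfolding csubspace_def by blast
    show "g (scaleC c x) = cnj c * g x" using gV x cx Bv_scale_left[OF psd1 psd2 x w] by simp
  qed
  obtain z where z: "\<forall>v. g v = cinner v z" using riesz[OF gadd gsc gc] by blast
  show ?thesis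
  proof (intro exI ballI)
    fix v assume "v \<in> Vset W \<psi> D"
    then have "g v = Bv W \<psi> D \<phi> v w" using gV by blast
    then show "Bv W \<psi> D \<phi> v w = cinner v z" using z by simp
  qed
qed

lemma A0:
  assumes "w \<in> Vset W \<psi> D" "v \<in> Vset W \<psi> D"
  shows "Bv W \<psi> D \<phi> v w = cinner v (A0 W \<psi> D \<phi> w)"
proof -
  have "\<forall>v\<in>Vset W \<psi> D. Bv W \<psi> D \<phi> v w = cinner v (A0 W \<psi> D \<phi> w)"
    unfolding A0_def by (rule someI_ex[OF riesz_V[OF assms(1)]])
  then show ?thesis using assms(2) by blast
qed

lemma A0_add:
  assumes w: "w \<in> Vset W \<psi> D" and w': "w' \<in> Vset W \<psi> D"
  shows "A0 W \<psi> D \<phi> (w + w') = A0 W \<psi> D \<phi> w + A0 W \<psi> D \<phi> w'"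
proof (rule rep_unique[OF dense])
  fix v assume v: "v \<in> Vset W \<psi> D"
  have ww: "w + w' \<in> Vset W \<psi> D" using Vset_csubspace w w' unfolding csubspace_def by blast
  show "cinner v (A0 W \<psi> D \<phi> (w + w')) = cinner v (A0 W \<psi> D \<phi> w + A0 W \<psi> D \<phi> w')"
    using A0[OF ww v] A0[OF w v] A0[OF w' v] Bv_add_right[OF psd1 psd2 v w w']
    by (simp add: cinner_add_right)
qed

lemma A0_scale:
  assumes w: "w \<in> Vset W \<psi> D"
  shows "A0 W \<psi> D \<phi> (scaleC c w) = scaleC c (A0 W \<psi> D \<phi> w)"
proof (rule rep_unique[OF dense])
  fix v assume v: "v \<in> Vset W \<psi> D"
  have cw: "scaleC c w \<in> Vset W \<psi> D" using Vset_csubspace w unfolding csubspace_def by blast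
  show "cinner v (A0 W \<psi> D \<phi> (scaleC c w)) = cinner v (scaleC c (A0 W \<psi> D \<phi> w))"
    using A0[OF cw v] A0[OF w v] Bv_scale_right[OF psd1 psd2 v w]
    by (simp add: cinner_scaleC_right)
qed

lemma A0_diff:
  assumes x: "x \<in> Vset W \<psi> D" and y: "y \<in> Vset W \<psi> D"
  shows "A0 W \<psi> D \<phi> (x - y) = A0 W \<psi> D \<phi> x - A0 W \<psi> D \<phi> y"
proof -
  have xy: "x - y \<in> Vset W \<psi> D" by (rule csubspace_diff[OF Vset_csubspace x y])
  have "A0 W \<psi> D \<phi> ((x - y) + y) = A0 W \<psi> D \<phi> (x - y) + A0 W \<psi> D \<phi> y" by (rule A0_add[OF xy y])
  then show ?thesis by simp
qed

lemma A0_bound: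
  assumes w: "w \<in> Vset W \<psi> D"
  shows "norm (A0 W \<psi> D \<phi> w) \<le> norm w"
proof -
  define z where "z = A0 W \<psi> D \<phi> w"
  have "v \<in> {v. cmod (cinner v z) \<le> norm v * norm w}" for v
  proof (rule dense_closed[OF dense])
    show "closed {v. cmod (cinner v z) \<le> norm v * norm w}"
    proof (rule closed_Collect_le)
      show "continuous_on UNIV (\<lambda>v. cmod (cinner v z))"
        by (intro continuous_on_norm continuous_cinner continuous_on_id continuous_on_const)
      show "continuous_on UNIV (\<lambda>v::'h. norm v * norm w)"
        by (intro continuous_on_mult_right continuous_on_norm continuous_on_id)
    qed
    show "Vset W \<psi> D \<subseteq> {v. cmod (cinner v z) \<le> norm v * norm w}"
    proof
      fix v assume v: "v \<in> Vset W \<psi> D"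
      show "v \<in> {v. cmod (cinner v z) \<le> norm v * norm w}"
        using A0[OF w v] Bv_bound[OF psd1 psd2 v w] unfolding z_def by simp
    qed
  qed
  then have "cmod (cinner z z) \<le> norm z * norm w" by blast
  then have "norm z * norm z \<le> norm z * norm w" by (simp add: cinner_self power2_eq_square norm_mult)
  then have "norm z \<le> norm w"
    by (cases "norm z = 0") (auto simp: mult_le_cancel_left_pos)
  then show ?thesis unfolding z_def .
qed

lemma exists_A:
  "\<exists>A. bounded_clinear A \<and> positive_op A \<and> positive_op (\<lambda>x. x - A x) \<and>
       (\<forall>\<xi>\<in>D. \<forall>\<eta>\<in>D. \<phi> \<xi> \<eta> = phi_op W \<psi> A \<xi> \<eta>)"
proof -
  have lip: "norm (A0 W \<psi> D \<phi> x - A0 W \<psi> D \<phi> y) \<le> 1 * norm (x - y)"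
    if x: "x \<in> Vset W \<psi> D" and y: "y \<in> Vset W \<psi> D" for x y
    using A0_diff[OF x y] A0_bound[OF csubspace_diff[OF Vset_csubspace x y]] by simp
  obtain A where Ac: "continuous_on UNIV A" and AV: "\<forall>x\<in>Vset W \<psi> D. A x = A0 W \<psi> D \<phi> x"
    using ext_lip[OF dense lip] by blast
  have Aadd: "A (x + y) = A x + A y" for x y
  proof (rule dense_eq2[OF dense, where f = "\<lambda>x y. A (x + y)" and g = "\<lambda>x y. A x + A y"])
    show "continuous_on UNIV (\<lambda>p. A (fst p + snd p))" by (rule cont_compose_add[OF Ac])
    show "continuous_on UNIV (\<lambda>p. A (fst p) + A (snd p))" by (rule cont_add_fst_snd[OF Ac])
    fix x y assume x: "x \<in> Vset W \<psi> D" and y: "y \<in> Vset W \<psi> D"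
    have xy: "x + y \<in> Vset W \<psi> D" using Vset_csubspace x y unfolding csubspace_def by blast
    show "A (x + y) = A x + A y" using AV x y xy A0_add[OF x y] by simp
  qed
  have Asc: "A (scaleC c x) = scaleC c (A x)" for c x
  proof (rule dense_eq[OF dense, where f = "\<lambda>x. A (scaleC c x)" and g = "\<lambda>x. scaleC c (A x)"])
    show "continuous_on UNIV (\<lambda>x. A (scaleC c x))"
      by (rule continuous_on_compose2[OF Ac]) (auto intro!: continuous_scaleC continuous_on_id)
    show "continuous_on UNIV (\<lambda>x. scaleC c (A x))" by (intro continuous_scaleC Ac)
    fix x assume x: "x \<in> Vset W \<psi> D"
    have cx: "scaleC c x \<in> Vset W \<psi> D" using Vset_csubspace x unfolding csubspace_def by blast
    show "A (scaleC c x) = scaleC c (A x)" using AV x cx A0_scale[OF x] by simp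
  qed
  have Abd: "norm (A x) \<le> norm x" for x
  proof -
    have "x \<in> {x. norm (A x) \<le> norm x}"
    proof (rule dense_closed[OF dense])
      show "closed {x. norm (A x) \<le> norm x}"
        by (rule closed_Collect_le) (intro continuous_on_norm Ac continuous_on_id)+
      show "Vset W \<psi> D \<subseteq> {x. norm (A x) \<le> norm x}"
      proof
        fix v assume v: "v \<in> Vset W \<psi> D"
        show "v \<in> {x. norm (A x) \<le> norm x}" using AV v A0_bound[OF v] by simp
      qed
    qed
    then show ?thesis by simp
  qed
  have bc: "bounded_clinear A"
    unfolding bounded_clinear_def
  proof (intro conjI exI allI)
    show "clinear A" unfolding clinear_def using Aadd Asc by blast
    show "norm (A x) \<le> norm x * 1" for x using Abd[of x] by simp
  qed
  have Aform: "cinner v (A w) = Bv W \<psi> D \<phi> v w" if v: "v \<in> Vset W \<psi> D" and w: "w \<in> Vset W \<psi> D" for v w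
    using A0[OF w v] AV w by simp
  have cA: "continuous_on UNIV (\<lambda>x. cinner x (A x))" by (intro continuous_cinner continuous_on_id Ac)
  have pos1: "positive_op A"
    unfolding positive_op_def
  proof
    fix x
    have "x \<in> {x. cnonneg (cinner x (A x))}"
    proof (rule dense_closed[OF dense closed_cnonneg[OF cA]])
      show "Vset W \<psi> D \<subseteq> {x. cnonneg (cinner x (A x))}"
      proof
        fix v assume v: "v \<in> Vset W \<psi> D"
        show "v \<in> {x. cnonneg (cinner x (A x))}" using Aform[OF v v] Bv_pos(1)[OF psd1 psd2 v] by simp
      qed
    qed
    then show "cnonneg (cinner x (A x))" by simp
  qed
  have cA2: "continuous_on UNIV (\<lambda>x. cinner x (x - A x))"
    by (intro continuous_cinner continuous_on_id continuous_on_diff Ac)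
  have pos2: "positive_op (\<lambda>x. x - A x)"
    unfolding positive_op_def
  proof
    fix x
    have "x \<in> {x. cnonneg (cinner x (x - A x))}"
    proof (rule dense_closed[OF dense closed_cnonneg[OF cA2]])
      show "Vset W \<psi> D \<subseteq> {x. cnonneg (cinner x (x - A x))}"
      proof
        fix v assume v: "v \<in> Vset W \<psi> D"
        have "cinner v (v - A v) = cinner v v - Bv W \<psi> D \<phi> v v"
          using Aform[OF v v] by (simp add: cinner_diff_right)
        then show "v \<in> {x. cnonneg (cinner x (x - A x))}" using Bv_pos(2)[OF psd1 psd2 v] by simp
      qed
    qed
    then show "cnonneg (cinner x (x - A x))" by simp
  qed
  have phi: "\<phi> \<xi> \<eta> = phi_op W \<psi> A \<xi> \<eta>" if "\<xi> \<in> D" "\<eta> \<in> D" for \<xi> \<eta>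
    unfolding phi_op_def using Aform[OF W_in_Vset[OF that(1)] W_in_Vset[OF that(2)]]
      Bv_delta[OF psd1 psd2 that] by simp
  show ?thesis using bc pos1 pos2 phi by blast
qed

lemma unique_A:
  assumes A1: "bounded_clinear A1" and A2: "bounded_clinear A2"
    and h1: "\<forall>\<xi>\<in>D. \<forall>\<eta>\<in>D. \<phi> \<xi> \<eta> = phi_op W \<psi> A1 \<xi> \<eta>"
    and h2: "\<forall>\<xi>\<in>D. \<forall>\<eta>\<in>D. \<phi> \<xi> \<eta> = phi_op W \<psi> A2 \<xi> \<eta>"
  shows "A1 = A2"
proof -
  have l1: "clinear A1" and l2: "clinear A2" using A1 A2 unfolding bounded_clinear_def by auto
  have onV: "A1 w = A2 w" if w: "w \<in> Vset W \<psi> D" for w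
  proof (rule rep_unique[OF dense])
    fix v assume v: "v \<in> Vset W \<psi> D"
    obtain a where a: "fin D a" and va: "v = cvec W \<psi> a" using v unfolding Vset_def by blast
    obtain b where b: "fin D b" and wb: "w = cvec W \<psi> b" using w unfolding Vset_def by blast
    have "form (phi_op W \<psi> A1) a b = form (phi_op W \<psi> A2) a b"
    proof (rule form_cong)
      fix x y assume "x \<in> fsupp a" "y \<in> fsupp b"
      then have xD: "x \<in> D" and yD: "y \<in> D" using fin_fsupp_D[OF a] fin_fsupp_D[OF b] by auto
      have "\<phi> x y = phi_op W \<psi> A1 x y" using h1 xD yD by blast
      moreover have "\<phi> x y = phi_op W \<psi> A2 x y" using h2 xD yD by blast
      ultimately show "phi_op W \<psi> A1 x y = phi_op W \<psi> A2 x y" by simp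
    qed
    then show "cinner v (A1 w) = cinner v (A2 w)"
      unfolding va wb cinner_vec[OF l1] cinner_vec[OF l2] .
  qed
  have "A1 x = A2 x" for x
    by (rule dense_eq[OF dense]) (use onV bounded_clinear_cont[OF A1] bounded_clinear_cont[OF A2] in auto)
  then show ?thesis by blast
qed

end

lemma skew0:
  fixes S :: "real^'d^'d"
  assumes sk: "transpose S = - S"
  shows "\<xi> \<bullet> (S *v \<xi>) = 0"
proof -
  have Sswap: "S$i$j = - S$j$i" for i j
    using arg_cong[OF sk, of "\<lambda>M. M$j$i"] by (simp add: transpose_def)
  have t: "\<xi>$i * S$i$j * \<xi>$j = - (\<xi>$j * S$j$i * \<xi>$i)" for i j
    using Sswap[of i j] by simp
  define Q where "Q = (\<Sum>i\<in>UNIV. \<Sum>j\<in>UNIV. \<xi>$i * S$i$j * \<xi>$j)"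
  have eq: "\<xi> \<bullet> (S *v \<xi>) = Q"
    unfolding Q_def inner_vec_def matrix_vector_mult_def inner_real_def
    by (simp add: sum_distrib_left mult.assoc)
  have "Q = (\<Sum>i\<in>UNIV. \<Sum>j\<in>UNIV. - (\<xi>$j * S$j$i * \<xi>$i))" unfolding Q_def by (intro sum.cong refl) (rule t)
  also have "\<dots> = - (\<Sum>i\<in>UNIV. \<Sum>j\<in>UNIV. \<xi>$j * S$j$i * \<xi>$i)" by (simp only: sum_negf)
  also have "(\<Sum>i\<in>UNIV. \<Sum>j\<in>UNIV. \<xi>$j * S$j$i * \<xi>$i) = Q"
    unfolding Q_def by (rule sum.swap)
  finally have "Q = - Q" .
  then show ?thesis using eq by simp
qed

context
  fixes S :: "real^'d^'d" and W :: "real^'d \<Rightarrow> 'h::chilbert_space \<Rightarrow> 'h" and \<psi> :: 'h and D :: "(real^'d) set"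
  assumes sk: "transpose S = - S" and rep: "ccr_rep S W" and Dd: "closure D = UNIV"
begin

lemma W_bc: "bounded_clinear (W \<xi>)" and W_iso: "cinner (W \<xi> x) (W \<xi> y) = cinner x y"
  and W_surj: "surj (W \<xi>)"
  using rep unfolding ccr_rep_def unitary_op_def by auto

lemma W_mult: "W \<xi> (W \<eta> x) = scaleC (exp (\<i> * complex_of_real (\<xi> \<bullet> (S *v \<eta>)))) (W (\<xi> + \<eta>) x)"
proof -
  have "W \<xi> \<circ> W \<eta> = (\<lambda>x. scaleC (exp (\<i> * complex_of_real (\<xi> \<bullet> (S *v \<eta>)))) (W (\<xi> + \<eta>) x))"
    using rep unfolding ccr_rep_def by blast
  then show ?thesis by (metis comp_apply)
qed

lemma W_cont: "continuous_on UNIV (\<lambda>\<xi>. W \<xi> x)"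
  using rep unfolding ccr_rep_def by blast

lemma W0: "W 0 x = x"
proof -
  have idem: "W 0 (W 0 y) = W 0 y" for y using W_mult[of 0 0 y] by (simp add: scaleC_one)
  obtain y where "x = W 0 y" using W_surj[of 0] by (metis surjD)
  then show ?thesis using idem by simp
qed

lemma W_inv: "W \<xi> (W (- \<xi>) x) = x"
proof -
  have "\<xi> \<bullet> (S *v (- \<xi>)) = - (\<xi> \<bullet> (S *v \<xi>))"
  proof -
    have "S *v (- \<xi>) = - (S *v \<xi>)" using matrix_vector_mult_diff_distrib[of S 0 \<xi>] by simp
    then show ?thesis by (simp add: inner_minus_right)
  qed
  then have "\<xi> \<bullet> (S *v (- \<xi>)) = 0" using skew0[OF sk] by simp
  then show ?thesis using W_mult[of \<xi> "- \<xi>" x] by (simp add: scaleC_one W0)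
qed

lemma W_adj: "cinner (W \<xi> r) k = cinner r (W (- \<xi>) k)"
proof -
  have "cinner (W \<xi> r) k = cinner (W \<xi> r) (W \<xi> (W (- \<xi>) k))" by (simp add: W_inv)
  also have "\<dots> = cinner r (W (- \<xi>) k)" by (rule W_iso)
  finally show ?thesis .
qed

definition K where "K = closure (Vset W \<psi> D)"

lemma K_sub: "csubspace K" unfolding K_def by (rule closure_csubspace[OF Vset_csubspace])

lemma K_closed: "closed K" unfolding K_def by simp

lemma Wz_in_K: "W \<zeta> \<psi> \<in> K"
proof -
  have "(\<lambda>\<zeta>. W \<zeta> \<psi>) ` closure D \<subseteq> K"
  proof (rule image_closure_subset[OF _ K_closed])
    show "continuous_on (closure D) (\<lambda>\<zeta>. W \<zeta> \<psi>)" by (rule continuous_on_subset[OF W_cont]) simp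
    have "(\<lambda>\<zeta>. W \<zeta> \<psi>) ` D \<subseteq> Vset W \<psi> D" by (rule image_subsetI) (rule W_in_Vset)
    then show "(\<lambda>\<zeta>. W \<zeta> \<psi>) ` D \<subseteq> K"
      unfolding K_def using closure_subset by (rule order_trans)
  qed
  moreover have "W \<zeta> \<psi> \<in> (\<lambda>\<zeta>. W \<zeta> \<psi>) ` closure D" unfolding Dd by (rule imageI[OF UNIV_I])
  ultimately show ?thesis by (rule subsetD)
qed

lemma WK: "x \<in> K \<Longrightarrow> W \<xi> x \<in> K"
proof -
  have "W \<xi> ` closure (Vset W \<psi> D) \<subseteq> K"
  proof (rule image_closure_subset[OF _ K_closed])
    show "continuous_on (closure (Vset W \<psi> D)) (W \<xi>)" by (rule bounded_clinear_cont[OF W_bc])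
    show "W \<xi> ` Vset W \<psi> D \<subseteq> K"
    proof
      fix y assume "y \<in> W \<xi> ` Vset W \<psi> D"
      then obtain a where a: "fin D a" and y: "y = W \<xi> (cvec W \<psi> a)" unfolding Vset_def by blast
      have l: "clinear (W \<xi>)" using W_bc unfolding bounded_clinear_def by blast
      have "y = (\<Sum>\<eta>\<in>fsupp a. scaleC (a \<eta>) (W \<xi> (W \<eta> \<psi>)))"
        unfolding y cvec_def by (simp add: clinear_sum[OF l] clinear_scaleC[OF l])
      also have "\<dots> \<in> K"
      proof (rule csubspace_sum[OF K_sub])
        fix \<eta> assume "\<eta> \<in> fsupp a"
        have "W (\<xi> + \<eta>) \<psi> \<in> K" by (rule Wz_in_K)
        then show "scaleC (a \<eta>) (W \<xi> (W \<eta> \<psi>)) \<in> K"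
          using K_sub unfolding W_mult csubspace_def by blast
      qed
      finally show "y \<in> K" .
    qed
  qed
  then show "x \<in> K \<Longrightarrow> W \<xi> x \<in> K" unfolding K_def by (simp add: image_subset_iff)
qed

definition P where "P x = (SOME m. m \<in> K \<and> (\<forall>y\<in>K. cinner (x - m) y = 0))"

lemma P: "P x \<in> K \<and> (\<forall>y\<in>K. cinner (x - P x) y = 0)"
proof -
  have "\<exists>m. m \<in> K \<and> (\<forall>y\<in>K. cinner (x - m) y = 0)"
    using projection_exists[OF K_sub K_closed, of x] by blast
  then show ?thesis unfolding P_def by (rule someI_ex)
qed

lemma P_uniq: "m \<in> K \<Longrightarrow> (\<forall>y\<in>K. cinner (x - m) y = 0) \<Longrightarrow> P x = m"
  using projection_unique[OF K_sub, of "P x" m x] P[of x] by blast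

lemma P_bc: "bounded_clinear P"
  unfolding bounded_clinear_def clinear_def
proof (intro conjI allI exI)
  show "P (x + y) = P x + P y" for x y
  proof (rule P_uniq)
    show "P x + P y \<in> K" using P[of x] P[of y] K_sub unfolding csubspace_def by blast
    show "\<forall>k\<in>K. cinner (x + y - (P x + P y)) k = 0"
    proof
      fix k assume "k \<in> K"
      then have "cinner (x - P x) k = 0" "cinner (y - P y) k = 0" using P[of x] P[of y] by auto
      moreover have "cinner (x + y - (P x + P y)) k = cinner ((x - P x) + (y - P y)) k"
        by (rule arg_cong[where f="\<lambda>z. cinner z k"]) (simp add: algebra_simps)
      ultimately show "cinner (x + y - (P x + P y)) k = 0" by (simp add: cinner_add_left)
    qed
  qed
  show "P (scaleC c x) = scaleC c (P x)" for c x
  proof (rule P_uniq)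
    show "scaleC c (P x) \<in> K" using P[of x] K_sub unfolding csubspace_def by blast
    show "\<forall>k\<in>K. cinner (scaleC c x - scaleC c (P x)) k = 0"
    proof
      fix k assume "k \<in> K"
      then have "cinner (x - P x) k = 0" using P[of x] by auto
      then show "cinner (scaleC c x - scaleC c (P x)) k = 0"
        by (simp add: scaleC_diff_right[symmetric] cinner_scaleC_left)
    qed
  qed
  show "norm (P x) \<le> norm x * 1" for x
  proof -
    have "cinner (x - P x) (P x) = 0" using P[of x] by blast
    then have "cinner (P x) (x - P x) = 0" using cinner_commute[of "P x" "x - P x"] by simp
    then have "(norm (P x + (x - P x)))^2 = (norm (P x))^2 + (norm (x - P x))^2" by (rule pythag)
    then have "(norm (P x))^2 \<le> (norm x)^2" by simp
    then have "norm (P x) \<le> norm x" by (rule power2_le_imp_le) simp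
    then show ?thesis by simp
  qed
qed

lemma P_comm: "P (W \<xi> x) = W \<xi> (P x)"
proof (rule P_uniq)
  show "W \<xi> (P x) \<in> K" using P[of x] WK by blast
  show "\<forall>k\<in>K. cinner (W \<xi> x - W \<xi> (P x)) k = 0"
  proof
    fix k assume k: "k \<in> K"
    have l: "clinear (W \<xi>)" using W_bc unfolding bounded_clinear_def by blast
    have "cinner (W \<xi> x - W \<xi> (P x)) k = cinner (W \<xi> (x - P x)) k" by (simp add: clinear_diff[OF l])
    also have "\<dots> = cinner (x - P x) (W (- \<xi>) k)" by (rule W_adj)
    also have "\<dots> = 0" using P[of x] WK[OF k] by blast
    finally show "cinner (W \<xi> x - W \<xi> (P x)) k = 0" .
  qed
qed

lemma dense_V:
  assumes cyc: "cyclic_vec (CCR_alg W) \<psi>"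
  shows "closure (Vset W \<psi> D) = UNIV"
proof -
  have Pc: "P \<in> commutant (range W)"
    unfolding commutant_def using P_bc P_comm by (auto simp: fun_eq_iff)
  have psiK: "\<psi> \<in> K" using Wz_in_K[of 0] by (simp add: W0)
  have Ppsi: "P \<psi> = \<psi>" by (rule P_uniq[OF psiK]) simp
  have "{B \<psi> | B. B \<in> CCR_alg W} \<subseteq> K"
  proof
    fix y assume "y \<in> {B \<psi> | B. B \<in> CCR_alg W}"
    then obtain B where B: "B \<in> CCR_alg W" and y: "y = B \<psi>" by blast
    have "B \<circ> P = P \<circ> B" using B Pc unfolding CCR_alg_def commutant_def by blast
    then have "B (P \<psi>) = P (B \<psi>)" by (metis comp_apply)
    then have "y = P (B \<psi>)" using Ppsi y by simp
    then show "y \<in> K" using P by blast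
  qed
  then have "closure {B \<psi> | B. B \<in> CCR_alg W} \<subseteq> K" by (rule closure_minimal[OF _ K_closed])
  then have "K = UNIV" using cyc unfolding cyclic_vec_def by auto
  then show ?thesis unfolding K_def .
qed

end

theorem lemma2:
  fixes S :: "real^'d^'d"
    and W :: "real^'d \<Rightarrow> 'h::chilbert_space \<Rightarrow> 'h"
    and \<psi> :: 'h
    and D :: "(real^'d) set"
    and \<phi> :: "real^'d \<Rightarrow> real^'d \<Rightarrow> complex"
  assumes "transpose S = - S"
    and "ccr_rep S W"
    and "cyclic_vec (CCR_alg W) \<psi>"
    and "norm \<psi> = 1"
    and "closure D = UNIV"
    and "psd_on D \<phi>"
    and "psd_on D (\<lambda>\<xi> \<eta>. phi_op W \<psi> id \<xi> \<eta> - \<phi> \<xi> \<eta>)"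
  shows "(\<exists>!A. bounded_clinear A \<and> positive_op A \<and> positive_op (\<lambda>x. x - A x) \<and>
              (\<forall>\<xi>\<in>D. \<forall>\<eta>\<in>D. \<phi> \<xi> \<eta> = phi_op W \<psi> A \<xi> \<eta>))
       \<and> (\<exists>\<Phi>. continuous_on UNIV (\<lambda>(\<xi>, \<eta>). \<Phi> \<xi> \<eta>) \<and>
              (\<forall>\<xi>\<in>D. \<forall>\<eta>\<in>D. \<Phi> \<xi> \<eta> = \<phi> \<xi> \<eta>))"
proof -
  have dense: "closure (Vset W \<psi> D) = UNIV"
    by (rule dense_V[OF assms(1) assms(2) assms(5) assms(3)])
  obtain A where bcA: "bounded_clinear A" and pA: "positive_op A" and pA2: "positive_op (\<lambda>x. x - A x)"
    and phiA: "\<forall>\<xi>\<in>D. \<forall>\<eta>\<in>D. \<phi> \<xi> \<eta> = phi_op W \<psi> A \<xi> \<eta>"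
    using exists_A[OF assms(6) assms(7) dense] by blast
  have ex1: "\<exists>!A. bounded_clinear A \<and> positive_op A \<and> positive_op (\<lambda>x. x - A x) \<and>
              (\<forall>\<xi>\<in>D. \<forall>\<eta>\<in>D. \<phi> \<xi> \<eta> = phi_op W \<psi> A \<xi> \<eta>)"
  proof (rule ex1I[of _ A])
    show "bounded_clinear A \<and> positive_op A \<and> positive_op (\<lambda>x. x - A x) \<and>
              (\<forall>\<xi>\<in>D. \<forall>\<eta>\<in>D. \<phi> \<xi> \<eta> = phi_op W \<psi> A \<xi> \<eta>)" using bcA pA pA2 phiA by blast
    fix A' assume h: "bounded_clinear A' \<and> positive_op A' \<and> positive_op (\<lambda>x. x - A' x) \<and>
              (\<forall>\<xi>\<in>D. \<forall>\<eta>\<in>D. \<phi> \<xi> \<eta> = phi_op W \<psi> A' \<xi> \<eta>)"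
    show "A' = A"
      by (rule unique_A[OF assms(6) assms(7) dense]) (use h bcA phiA in auto)
  qed
  have Wc: "continuous_on UNIV (\<lambda>\<xi>. W \<xi> \<psi>)" using assms(2) unfolding ccr_rep_def by blast
  have c1: "continuous_on UNIV (\<lambda>p::(real^'d) \<times> (real^'d). W (fst p) \<psi>)"
    by (rule continuous_on_compose2[OF Wc]) (auto intro!: continuous_intros)
  have c2': "continuous_on UNIV (\<lambda>p::(real^'d) \<times> (real^'d). W (snd p) \<psi>)"
    by (rule continuous_on_compose2[OF Wc]) (auto intro!: continuous_intros)
  have c2: "continuous_on UNIV (\<lambda>p::(real^'d) \<times> (real^'d). A (W (snd p) \<psi>))"
    by (rule continuous_on_compose2[OF bounded_clinear_cont[OF bcA, of UNIV] c2']) simp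
  have "continuous_on UNIV (\<lambda>p::(real^'d) \<times> (real^'d). cinner (W (fst p) \<psi>) (A (W (snd p) \<psi>)))"
    by (rule continuous_cinner[OF c1 c2])
  then have cont: "continuous_on UNIV (\<lambda>(\<xi>, \<eta>). phi_op W \<psi> A \<xi> \<eta>)"
    unfolding case_prod_unfold phi_op_def .
  have eq: "\<forall>\<xi>\<in>D. \<forall>\<eta>\<in>D. phi_op W \<psi> A \<xi> \<eta> = \<phi> \<xi> \<eta>" using phiA by simp
  show ?thesis using ex1 cont eq by blast
qed

end
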